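(* Let $\mathcal{X},\mathcal{Y}$ be finite sets with $2\le|\mathcal{X}|,|\mathcal{Y}|<\infty$ and $P_{X,Y}$ a joint pmf on $\mathcal{X}\times\mathcal{Y}$ with $P_X(x)>0$ for all $x$ and $P_Y(y)>0$ for all $y$. Let $f:(0,\infty)\to\mathbb{R}$ be convex, strictly convex and thrice differentiable at $1$, with $f(1)=0$ and $f''(1)>0$, such that for every $t\in(0,\infty)$, $$\bigl(f(t)-f'(1)(t-1)\bigr)\left(1-\frac{f'''(1)}{3f''(1)}(t-1)\right)\ge \frac{f''(1)}{2}(t-1)^2,$$ such that $g(x)=\frac{f(x)-f(0)}{x}$ (with $f(0)=\lim_{t\to0^+}f(t)$) is concave on $(0,\infty)$, and such that $f$ induces a sub-additive and homogeneous $f$-entropy. If $(X_1,Y_1),\dots,(X_n,Y_n)$ are i.i.d. with joint pmf $P_{X,Y}$, then $$\eta_{\chi^2}(P_{X_1^n},P_{Y_1^n|X_1^n})\le\eta_f(P_{X_1^n},P_{Y_1^n|X_1^n})\le\frac{f'(1)+f(0)}{f''(1)\min_{x\in\mathcal{X}}P_X(x)}\,\eta_{\chi^2}(P_{X_1^n},P_{Y_1^n|X_1^n}).$$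
   Context: $X_1^n=(X_1,\dots,X_n)$, $Y_1^n=(Y_1,\dots,Y_n)$. Strict convexity at $1$ means $\lambda f(x)+(1-\lambda)f(y)>f(1)$ whenever $\lambda\in(0,1)$, $x,y>0$, $\lambda x+(1-\lambda)y=1$. The $f$-divergence is $D_f(R\|P)=\sum P f(R/P)$ with conventions $f(0)=\lim_{t\to0^+}f(t)$, $0f(0/0)=0$, $0f(r/0)=r\lim_{p\to0^+}pf(1/p)$; $\chi^2(R\|P)=\sum(R-P)^2/P$. For finite-valued $(U,V)$ with channel matrix $W$ of $P_{V|U}$, $\eta_f(P_U,P_{V|U})=\sup\{D_f(WR_U\|WP_U)/D_f(R_U\|P_U): R_U \text{ a pmf},\ 0<D_f(R_U\|P_U)<\infty\}$, and $\eta_{\chi^2}$ is the analogous coefficient for $\chi^2$-divergence. The $f$-entropy of a nonnegative random variable $Z$ is $\mathrm{Ent}_f(Z)=\mathbb{E}[f(Z)]-f(\mathbb{E}[Z])$; it is homogeneous if $\mathrm{Ent}_f(cZ)=c\,\mathrm{Ent}_f(Z)$ for all $c>0$, and sub-additive if for all independent random variables $X_1,\dots,X_n$ and every nonnegative $Z=h(X_1,\dots,X_n)$, $\mathrm{Ent}_f(Z)\le\sum_{i=1}^n\mathbb{E}[\mathrm{Ent}_f^{(i)}(Z)]$, where $\mathrm{Ent}_f^{(i)}(Z)$ is the $f$-entropy of $Z$ with respect to $X_i$ conditionally on $(X_j)_{j\ne i}$ (in the sense of Raginsky, "Strong data processing inequalities and $\Phi$-Sobolev inequalities"). *)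

theory Defs
  imports "HOL-Probability.Probability"
begin

text \<open>Extension of f to 0 by its right limit f0 = lim_{t->0+} f t.\<close>
definition fext :: "real \<Rightarrow> (real \<Rightarrow> real) \<Rightarrow> real \<Rightarrow> real" where
  "fext f0 f t = (if t = 0 then f0 else f t)"

definition fdiv :: "real \<Rightarrow> (real \<Rightarrow> real) \<Rightarrow> 'a set \<Rightarrow> ('a \<Rightarrow> real) \<Rightarrow> ('a \<Rightarrow> real) \<Rightarrow> ereal" where
  "fdiv f0 f A R P =
     (\<Sum>a\<in>A. if P a = 0
             then (if R a = 0 then 0
                   else ereal (R a) * Lim (at_right 0) (\<lambda>p. ereal (p * f (1 / p))))
             else ereal (P a * fext f0 f (R a / P a)))"

definition is_pmf_on :: "'a set \<Rightarrow> ('a \<Rightarrow> real) \<Rightarrow> bool" where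
  "is_pmf_on A R \<longleftrightarrow> (\<forall>a\<in>A. 0 \<le> R a) \<and> sum R A = 1"

text \<open>Output distribution W R of input distribution R through channel W (W u v = P(v|u)).\<close>
definition push :: "'u set \<Rightarrow> ('u \<Rightarrow> 'v \<Rightarrow> real) \<Rightarrow> ('u \<Rightarrow> real) \<Rightarrow> 'v \<Rightarrow> real" where
  "push A W R = (\<lambda>v. \<Sum>u\<in>A. R u * W u v)"

definition eta :: "real \<Rightarrow> (real \<Rightarrow> real) \<Rightarrow> 'u set \<Rightarrow> 'v set \<Rightarrow> ('u \<Rightarrow> real)
                   \<Rightarrow> ('u \<Rightarrow> 'v \<Rightarrow> real) \<Rightarrow> ereal" where
  "eta f0 f A B P W =
     Sup {fdiv f0 f B (push A W R) (push A W P) / fdiv f0 f A R P | R.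
            is_pmf_on A R \<and> 0 < fdiv f0 f A R P \<and> fdiv f0 f A R P < \<infinity>}"

text \<open>chi^2-divergence is the f-divergence of f(t) = (t-1)^2 (so f(0) = 1);
  for P > 0 this is sum (R-P)^2/P, and it is +infinity if R > 0 = P.\<close>
definition chi2div :: "'a set \<Rightarrow> ('a \<Rightarrow> real) \<Rightarrow> ('a \<Rightarrow> real) \<Rightarrow> ereal" where
  "chi2div A R P = fdiv 1 (\<lambda>t. (t - 1)\<^sup>2) A R P"

definition eta_chi2 :: "'u set \<Rightarrow> 'v set \<Rightarrow> ('u \<Rightarrow> real) \<Rightarrow> ('u \<Rightarrow> 'v \<Rightarrow> real) \<Rightarrow> ereal" where
  "eta_chi2 A B P W = eta 1 (\<lambda>t. (t - 1)\<^sup>2) A B P W"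

definition strictly_convex_at_one :: "(real \<Rightarrow> real) \<Rightarrow> bool" where
  "strictly_convex_at_one f \<longleftrightarrow>
     (\<forall>l x y. 0 < l \<and> l < 1 \<and> 0 < x \<and> 0 < y \<and> l * x + (1 - l) * y = 1
        \<longrightarrow> l * f x + (1 - l) * f y > f 1)"

definition thrice_diff_at :: "(real \<Rightarrow> real) \<Rightarrow> real \<Rightarrow> bool" where
  "thrice_diff_at f a \<longleftrightarrow>
     (\<exists>e>0. \<forall>x. \<bar>x - a\<bar> < e \<longrightarrow> f differentiable (at x) \<and> deriv f differentiable (at x))
     \<and> deriv (deriv f) differentiable (at a)"

definition fent :: "real \<Rightarrow> (real \<Rightarrow> real) \<Rightarrow> 'a measure \<Rightarrow> ('a \<Rightarrow> real) \<Rightarrow> real" where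
  "fent f0 f M Z = (\<integral>x. fext f0 f (Z x) \<partial>M) - fext f0 f (\<integral>x. Z x \<partial>M)"

text \<open>Homogeneity: Ent_f(cZ) = c Ent_f(Z) for every nonnegative (integrable) random variable Z
  and c > 0.  Random variables are realised on a probability space with sample space real,
  which is general enough to carry every distribution on [0,infinity).\<close>
definition fent_homogeneous :: "real \<Rightarrow> (real \<Rightarrow> real) \<Rightarrow> bool" where
  "fent_homogeneous f0 f \<longleftrightarrow>
     (\<forall>(M::real measure) Z c.
        prob_space M \<and> Z \<in> borel_measurable M \<and> (\<forall>x\<in>space M. 0 \<le> Z x) \<and> 0 < c \<and>
        integrable M Z \<and> integrable M (\<lambda>x. fext f0 f (Z x)) \<and>
        integrable M (\<lambda>x. fext f0 f (c * Z x))
        \<longrightarrow> fent f0 f M (\<lambda>x. c * Z x) = c * fent f0 f M Z)"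

text \<open>Sub-additivity (tensorisation): for independent X_1..X_n (realised as the coordinates of
  the product space of their laws mu_i) and Z = h(X_1,...,X_n) >= 0,
  Ent_f(Z) <= sum_i E[Ent_f^(i)(Z)], where Ent_f^(i)(Z) at x is the f-entropy of
  y |-> h(x(i:=y)) under mu_i (entropy w.r.t. X_i conditionally on the other coordinates).\<close>
definition fent_subadditive :: "real \<Rightarrow> (real \<Rightarrow> real) \<Rightarrow> bool" where
  "fent_subadditive f0 f \<longleftrightarrow>
     (\<forall>(n::nat) (\<mu>::nat \<Rightarrow> real measure) h.
        (\<forall>i<n. prob_space (\<mu> i)) \<and> h \<in> borel_measurable (PiM {..<n} \<mu>) \<and>
        (\<forall>x\<in>space (PiM {..<n} \<mu>). 0 \<le> h x) \<and>
        integrable (PiM {..<n} \<mu>) h \<and> integrable (PiM {..<n} \<mu>) (\<lambda>x. fext f0 f (h x))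
        \<longrightarrow> fent f0 f (PiM {..<n} \<mu>) h
              \<le> (\<Sum>i<n. \<integral>x. fent f0 f (\<mu> i) (\<lambda>y. h (x(i := y))) \<partial>(PiM {..<n} \<mu>)))"

definition margX :: "('x \<Rightarrow> 'y::finite \<Rightarrow> real) \<Rightarrow> 'x \<Rightarrow> real" where
  "margX P x = (\<Sum>y\<in>UNIV. P x y)"

definition margY :: "('x::finite \<Rightarrow> 'y \<Rightarrow> real) \<Rightarrow> 'y \<Rightarrow> real" where
  "margY P y = (\<Sum>x\<in>UNIV. P x y)"

definition lists_len :: "nat \<Rightarrow> 'a list set" where
  "lists_len n = {xs. length xs = n}"

definition inputN :: "nat \<Rightarrow> ('x \<Rightarrow> 'y::finite \<Rightarrow> real) \<Rightarrow> 'x list \<Rightarrow> real" where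
  "inputN n P xs = (\<Prod>i<n. margX P (xs ! i))"

definition chanN :: "nat \<Rightarrow> ('x \<Rightarrow> 'y::finite \<Rightarrow> real) \<Rightarrow> 'x list \<Rightarrow> 'y list \<Rightarrow> real" where
  "chanN n P xs ys = (\<Prod>i<n. P (xs ! i) (ys ! i) / margX P (xs ! i))"

end

theory Submission
  imports Defs
begin

lemma psi_deriv: "(1::real) + u > 0 \<Longrightarrow> ((\<lambda>u. (1 + u) * ln (1 + u) - u) has_real_derivative ln (1 + u)) (at u)"
  apply (rule derivative_eq_intros refl | simp)+
  done

lemma poly_deriv: "((\<lambda>v::real. v\<^sup>2/2 + c * v^3) has_real_derivative (x + 3*c*x\<^sup>2)) (at x)"
  by (rule derivative_eq_intros refl | simp)+

lemma psi_upper: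
  fixes u :: real assumes "\<bar>u\<bar> \<le> 1/2"
  shows "(1 + u) * ln (1 + u) - u \<le> (1 + 2*\<bar>u\<bar>) * u\<^sup>2 / 2"
proof (cases "u \<ge> 0")
  case True
  let ?g = "\<lambda>v::real. (v\<^sup>2/2 + 1 * v^3) - ((1 + v) * ln (1 + v) - v)"
  have "?g 0 \<le> ?g u"
  proof (rule DERIV_nonneg_imp_nondecreasing[of 0 u ?g, OF True])
    fix x :: real assume x: "0 \<le> x" "x \<le> u"
    have "ln (1 + x) \<le> x" using x by (intro ln_add_one_self_le_self) auto
    moreover have "(?g has_real_derivative ((x + 3*1*x\<^sup>2) - ln (1 + x))) (at x)"
      using x by (intro DERIV_diff[OF poly_deriv psi_deriv]) auto
    moreover have "(x + 3*1*x\<^sup>2) - ln (1 + x) \<ge> 0" using calculation(1) using zero_le_power2[of x] by linarith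
    ultimately show "\<exists>y. DERIV ?g x :> y \<and> y \<ge> 0" by blast
  qed
  then have "0 \<le> (u\<^sup>2/2 + 1 * u^3) - ((1 + u) * ln (1 + u) - u)" by simp
  moreover have "(1 + 2*\<bar>u\<bar>) * u\<^sup>2 / 2 = u\<^sup>2/2 + 1 * u^3" using True by (simp add: power2_eq_square power3_eq_cube field_simps)
  ultimately show ?thesis by linarith
next
  case False
  let ?g = "\<lambda>v::real. (v\<^sup>2/2 + (-1) * v^3) - ((1 + v) * ln (1 + v) - v)"
  have "?g u \<ge> ?g 0"
  proof (rule DERIV_nonpos_imp_nonincreasing[of u 0 ?g])
    show "u \<le> 0" using False by simp
    fix x :: real assume x: "u \<le> x" "x \<le> 0"
    have ax: "\<bar>x\<bar> \<le> 1/2" using x assms by auto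
    have "\<bar>ln (1 + x) - x\<bar> \<le> 2 * x\<^sup>2" using abs_ln_one_plus_x_minus_x_bound[OF ax] .
    moreover have "(?g has_real_derivative ((x + 3*(-1)*x\<^sup>2) - ln (1 + x))) (at x)"
      using ax by (intro DERIV_diff[OF poly_deriv psi_deriv]) auto
    moreover have "(x + 3*(-1)*x\<^sup>2) - ln (1 + x) \<le> 0" using calculation(1)
      using zero_le_power2[of x] by linarith
    ultimately show "\<exists>y. DERIV ?g x :> y \<and> y \<le> 0" by blast
  qed
  then have "0 \<le> (u\<^sup>2/2 + (-1) * u^3) - ((1 + u) * ln (1 + u) - u)" by simp
  moreover have "(1 + 2*\<bar>u\<bar>) * u\<^sup>2 / 2 = u\<^sup>2/2 + (-1) * u^3" using False by (simp add: power2_eq_square power3_eq_cube field_simps)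
  ultimately show ?thesis by linarith
qed

lemma psi_lower:
  fixes u :: real assumes "\<bar>u\<bar> \<le> 1/2"
  shows "(1 - \<bar>u\<bar>) * u\<^sup>2 / 2 \<le> (1 + u) * ln (1 + u) - u"
proof (cases "u \<ge> 0")
  case True
  let ?g = "\<lambda>v::real. ((1 + v) * ln (1 + v) - v) - (v\<^sup>2/2 + (-1/2) * v^3)"
  have "?g 0 \<le> ?g u"
  proof (rule DERIV_nonneg_imp_nondecreasing[of 0 u ?g, OF True])
    fix x :: real assume x: "0 \<le> x" "x \<le> u"
    have "x - x\<^sup>2 \<le> ln (1 + x)" using x assms by (intro ln_one_plus_pos_lower_bound) auto
    moreover have "(?g has_real_derivative (ln (1 + x) - (x + 3*(-1/2)*x\<^sup>2))) (at x)"
      using x by (intro DERIV_diff[OF psi_deriv poly_deriv]) auto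
    moreover have "ln (1 + x) - (x + 3*(-1/2)*x\<^sup>2) \<ge> 0" using calculation(1)
      using zero_le_power2[of x] by linarith
    ultimately show "\<exists>y. DERIV ?g x :> y \<and> y \<ge> 0" by blast
  qed
  then have "0 \<le> ((1 + u) * ln (1 + u) - u) - (u\<^sup>2/2 + (-1/2) * u^3)" by simp
  moreover have "(1 - \<bar>u\<bar>) * u\<^sup>2 / 2 = u\<^sup>2/2 + (-1/2) * u^3" using True by (simp add: power2_eq_square power3_eq_cube field_simps)
  ultimately show ?thesis by linarith
next
  case False
  let ?g = "\<lambda>v::real. ((1 + v) * ln (1 + v) - v) - (v\<^sup>2/2 + (1/2) * v^3)"
  have "?g u \<ge> ?g 0"
  proof (rule DERIV_nonpos_imp_nonincreasing[of u 0 ?g])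
    show "u \<le> 0" using False by simp
    fix x :: real assume x: "u \<le> x" "x \<le> 0"
    have ax: "\<bar>x\<bar> \<le> 1/2" using x assms by auto
    have "ln (1 + x) \<le> x" using ax by (intro ln_add_one_self_le_self2) auto
    moreover have "(?g has_real_derivative (ln (1 + x) - (x + 3*(1/2)*x\<^sup>2))) (at x)"
      using ax by (intro DERIV_diff[OF psi_deriv poly_deriv]) auto
    moreover have "ln (1 + x) - (x + 3*(1/2)*x\<^sup>2) \<le> 0" using calculation(1)
      using zero_le_power2[of x] by linarith
    ultimately show "\<exists>y. DERIV ?g x :> y \<and> y \<le> 0" by blast
  qed
  then have "0 \<le> ((1 + u) * ln (1 + u) - u) - (u\<^sup>2/2 + (1/2) * u^3)" by simp
  moreover have "(1 - \<bar>u\<bar>) * u\<^sup>2 / 2 = u\<^sup>2/2 + (1/2) * u^3" using False by (simp add: power2_eq_square power3_eq_cube field_simps)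
  ultimately show ?thesis by linarith
qed

definition kld :: "'a set \<Rightarrow> ('a \<Rightarrow> real) \<Rightarrow> ('a \<Rightarrow> real) \<Rightarrow> real" where
  "kld A R Q = (\<Sum>a\<in>A. R a * ln (R a / Q a))"

definition chis :: "'a set \<Rightarrow> ('a \<Rightarrow> real) \<Rightarrow> ('a \<Rightarrow> real) \<Rightarrow> real" where
  "chis A R Q = (\<Sum>a\<in>A. (R a - Q a)\<^sup>2 / Q a)"

lemma fdiv_form:
  assumes "finite A" "\<forall>a\<in>A. Q a > 0" "\<forall>a\<in>A. R a \<ge> 0" "sum R A = sum Q A"
    and form: "\<forall>t>0. f t = c * t * ln t + f0 * (1 - t)"
  shows "fdiv f0 f A R Q = ereal (c * kld A R Q)"
proof -
  have "fdiv f0 f A R Q = (\<Sum>a\<in>A. ereal (Q a * fext f0 f (R a / Q a)))"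
    unfolding fdiv_def using assms(2) by (intro sum.cong) auto
  also have "\<dots> = ereal (\<Sum>a\<in>A. Q a * fext f0 f (R a / Q a))" by simp
  also have "(\<Sum>a\<in>A. Q a * fext f0 f (R a / Q a)) = (\<Sum>a\<in>A. c * (R a * ln (R a / Q a)) + f0 * (Q a - R a))"
  proof (intro sum.cong refl)
    fix a assume a: "a \<in> A"
    have q: "Q a > 0" using a assms(2) by auto
    show "Q a * fext f0 f (R a / Q a) = c * (R a * ln (R a / Q a)) + f0 * (Q a - R a)"
    proof (cases "R a = 0")
      case True then show ?thesis by (simp add: fext_def)
    next
      case False
      then have "R a / Q a > 0" using q a assms(3) by auto
      then have "fext f0 f (R a / Q a) = c * (R a / Q a) * ln (R a / Q a) + f0 * (1 - R a / Q a)"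
        using form by (simp add: fext_def)
      show ?thesis unfolding \<open>fext f0 f (R a / Q a) = _\<close> using q by (simp add: field_simps)
    qed
  qed
  also have "\<dots> = c * kld A R Q + f0 * (sum Q A - sum R A)"
    by (simp add: sum.distrib kld_def flip: sum_distrib_left sum_subtractf)
  finally show ?thesis using assms(4) by simp
qed

lemma chi2div_eq:
  assumes "\<forall>a\<in>A. Q a > 0"
  shows "chi2div A R Q = ereal (chis A R Q)"
proof -
  have "chi2div A R Q = (\<Sum>a\<in>A. ereal (Q a * fext 1 (\<lambda>t. (t - 1)\<^sup>2) (R a / Q a)))"
    unfolding chi2div_def fdiv_def using assms by (intro sum.cong) auto
  also have "\<dots> = ereal (\<Sum>a\<in>A. Q a * fext 1 (\<lambda>t. (t - 1)\<^sup>2) (R a / Q a))" by simp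
  also have "(\<Sum>a\<in>A. Q a * fext 1 (\<lambda>t. (t - 1)\<^sup>2) (R a / Q a)) = chis A R Q"
    unfolding chis_def
  proof (intro sum.cong refl)
    fix a assume a: "a \<in> A"
    have q: "Q a > 0" using a assms by auto
    have "fext 1 (\<lambda>t. (t - 1)\<^sup>2) (R a / Q a) = (R a / Q a - 1)\<^sup>2" by (simp add: fext_def)
    then show "Q a * fext 1 (\<lambda>t. (t - 1)\<^sup>2) (R a / Q a) = (R a - Q a)\<^sup>2 / Q a"
      using q by (simp add: field_simps power2_eq_square)
  qed
  finally show ?thesis .
qed

lemma chis_nonneg: "\<forall>a\<in>A. Q a > 0 \<Longrightarrow> chis A R Q \<ge> 0"
  unfolding chis_def by (intro sum_nonneg) auto

lemma chis_alt:
  assumes "finite A" "\<forall>a\<in>A. Q a > 0" "sum R A = 1" "sum Q A = 1"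
  shows "chis A R Q = (\<Sum>a\<in>A. R a * (R a / Q a - 1))"
proof -
  have "chis A R Q = (\<Sum>a\<in>A. R a * (R a / Q a - 1) + (Q a - R a))"
    unfolding chis_def using assms(2)
    by (intro sum.cong refl) (auto simp: field_simps power2_eq_square)
  also have "\<dots> = (\<Sum>a\<in>A. R a * (R a / Q a - 1))" using assms(3,4)
    by (simp add: sum.distrib sum_subtractf)
  finally show ?thesis .
qed

lemma kld_le_chis:
  assumes "finite A" "\<forall>a\<in>A. Q a > 0" "\<forall>a\<in>A. R a \<ge> 0" "sum R A = 1" "sum Q A = 1"
  shows "kld A R Q \<le> chis A R Q"
  unfolding chis_alt[OF assms(1,2,4,5)] kld_def
proof (intro sum_mono)
  fix a assume a: "a \<in> A"
  show "R a * ln (R a / Q a) \<le> R a * (R a / Q a - 1)"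
  proof (cases "R a = 0")
    case False
    then have "R a / Q a > 0" using a assms(2,3) by force
    then have "ln (R a / Q a) \<le> R a / Q a - 1" by (rule ln_le_minus_one)
    then show ?thesis using a assms(3) by (simp add: mult_left_mono)
  qed simp
qed

lemma sum_abs_half:
  assumes "finite A" "a \<in> A" "(\<Sum>b\<in>A. D b) = (0::real)"
  shows "2 * \<bar>D a\<bar> \<le> (\<Sum>b\<in>A. \<bar>D b\<bar>)"
proof -
  have "D a = - (\<Sum>b\<in>A-{a}. D b)" using assms sum.remove[of A a D] by simp
  then have "\<bar>D a\<bar> \<le> (\<Sum>b\<in>A-{a}. \<bar>D b\<bar>)" by (simp add: sum_abs)
  moreover have "(\<Sum>b\<in>A. \<bar>D b\<bar>) = \<bar>D a\<bar> + (\<Sum>b\<in>A-{a}. \<bar>D b\<bar>)" using assms sum.remove by metis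
  ultimately show ?thesis by linarith
qed

lemma pinsker:
  assumes "finite A" "\<forall>a\<in>A. Q a > 0" "\<forall>a\<in>A. R a \<ge> 0" "sum R A = 1" "sum Q A = 1"
    and H: "\<forall>t::real\<ge>0. (t * ln t - (t - 1)) * (1 + (t - 1) / 3) \<ge> (t - 1)\<^sup>2 / 2"
  shows "(\<Sum>a\<in>A. \<bar>R a - Q a\<bar>)\<^sup>2 \<le> 2 * kld A R Q"
proof -
  define u where "u a = R a / Q a - 1" for a
  define w where "w a = 1 + u a / 3" for a
  define S where "S = (\<Sum>a\<in>A. \<bar>R a - Q a\<bar>)"
  define T where "T = (\<Sum>a\<in>A. Q a * (u a)\<^sup>2 / w a)"
  have wpos: "w a > 0" if "a \<in> A" for a
  proof -
    have t: "R a / Q a \<ge> 0" using that assms(2,3) by auto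
    have "1 + (R a / Q a - 1) / 3 > 0" using t by (simp add: field_simps)
    then show ?thesis unfolding w_def u_def .
  qed
  have kl: "kld A R Q = (\<Sum>a\<in>A. Q a * ((R a / Q a) * ln (R a / Q a) - (R a / Q a - 1)))"
  proof -
    have "(\<Sum>a\<in>A. Q a * ((R a / Q a) * ln (R a / Q a) - (R a / Q a - 1)))
        = (\<Sum>a\<in>A. R a * ln (R a / Q a) - (R a - Q a))"
      using assms(2) by (intro sum.cong refl) (auto simp: field_simps)
    also have "\<dots> = kld A R Q" using assms(4,5) by (simp add: sum_subtractf kld_def)
    finally show ?thesis by simp
  qed
  have T_le: "T \<le> 2 * kld A R Q"
  proof -
    have "T = (\<Sum>a\<in>A. 2 * (Q a * ((u a)\<^sup>2 / 2 / w a)))" unfolding T_def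
      by (intro sum.cong refl) (simp add: field_simps)
    also have "\<dots> \<le> (\<Sum>a\<in>A. 2 * (Q a * ((R a / Q a) * ln (R a / Q a) - (R a / Q a - 1))))"
    proof (intro sum_mono mult_left_mono)
      fix a assume a: "a \<in> A"
      have t0: "R a / Q a \<ge> 0" using a assms(2,3) by auto
      have "(u a)\<^sup>2 / 2 \<le> ((R a / Q a) * ln (R a / Q a) - (R a / Q a - 1)) * w a"
        using H t0 unfolding u_def w_def by auto
      then show "(u a)\<^sup>2 / 2 / w a \<le> (R a / Q a) * ln (R a / Q a) - (R a / Q a - 1)"
        using wpos[OF a] by (simp only: pos_divide_le_eq)
      show "0 \<le> Q a" using a assms(2) by auto
    qed auto
    also have "\<dots> = 2 * kld A R Q" using kl by (simp add: sum_distrib_left)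
    finally show ?thesis .
  qed
  have sumw: "(\<Sum>a\<in>A. Q a * w a) = 1"
  proof -
    have "(\<Sum>a\<in>A. Q a * w a) = (\<Sum>a\<in>A. Q a + (R a - Q a) / 3)"
      using assms(2) unfolding w_def u_def by (intro sum.cong refl) (auto simp: field_simps)
    also have "\<dots> = 1" using assms(4,5) by (simp add: sum.distrib sum_subtractf sum_divide_distrib[symmetric])
    finally show ?thesis .
  qed
  have amgm: "S \<le> (l * T + 1 / l) / 2" if l: "l > 0" for l
  proof -
    have "S = (\<Sum>a\<in>A. Q a * \<bar>u a\<bar>)" unfolding S_def u_def
      using assms(2) by (intro sum.cong refl) (auto simp: field_simps abs_mult abs_div)
    also have "\<dots> \<le> (\<Sum>a\<in>A. (l * (Q a * (u a)\<^sup>2 / w a) + (Q a * w a) / l) / 2)"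
    proof (intro sum_mono)
      fix a assume a: "a \<in> A"
      have wa: "w a > 0" using wpos[OF a] .
      have qa: "Q a > 0" using a assms(2) by auto
      have "0 \<le> (l * \<bar>u a\<bar> - w a)\<^sup>2" by simp
      then have "2 * l * w a * \<bar>u a\<bar> \<le> l\<^sup>2 * (u a)\<^sup>2 + (w a)\<^sup>2"
        by (simp add: power2_eq_square algebra_simps)
      then have "2 * \<bar>u a\<bar> \<le> l * (u a)\<^sup>2 / w a + w a / l"
        using wa l by (simp add: field_simps power2_eq_square)
      then have "Q a * (2 * \<bar>u a\<bar>) \<le> Q a * (l * (u a)\<^sup>2 / w a + w a / l)"
        using qa by (intro mult_left_mono) auto
      then show "Q a * \<bar>u a\<bar> \<le> (l * (Q a * (u a)\<^sup>2 / w a) + (Q a * w a) / l) / 2"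
        by (simp add: field_simps)
    qed
    also have "\<dots> = (l * T + 1 / l) / 2"
      unfolding T_def using sumw
      by (simp add: sum_divide_distrib[symmetric] sum.distrib sum_distrib_left)
    finally show ?thesis .
  qed
  have S0: "S \<ge> 0" unfolding S_def by (intro sum_nonneg) auto
  have "S\<^sup>2 \<le> T"
  proof (cases "S = 0")
    case True
    have "T \<ge> 0" unfolding T_def using wpos assms(2) by (intro sum_nonneg) (auto intro!: divide_nonneg_pos)
    then show ?thesis using True by simp
  next
    case False
    then have Sp: "S > 0" using S0 by simp
    have "S \<le> (1/S * T + 1 / (1/S)) / 2" using amgm[of "1/S"] Sp by simp
    then have "2 * S \<le> T / S + S" by (simp add: field_simps)
    then have "S \<le> T / S" by simp
    then show ?thesis using Sp by (simp add: field_simps power2_eq_square)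
  qed
  then show ?thesis using T_le unfolding S_def by linarith
qed

lemma chis_le_kld:
  assumes "finite A" "\<forall>a\<in>A. Q a > 0" "\<forall>a\<in>A. R a \<ge> 0" "sum R A = 1" "sum Q A = 1"
    and H: "\<forall>t::real\<ge>0. (t * ln t - (t - 1)) * (1 + (t - 1) / 3) \<ge> (t - 1)\<^sup>2 / 2"
    and m: "m > 0" "\<forall>a\<in>A. m \<le> Q a"
  shows "chis A R Q \<le> kld A R Q / m"
proof -
  define S where "S = (\<Sum>a\<in>A. \<bar>R a - Q a\<bar>)"
  have D0: "(\<Sum>b\<in>A. R b - Q b) = 0" using assms(4,5) by (simp add: sum_subtractf)
  have "chis A R Q \<le> (\<Sum>a\<in>A. (R a - Q a)\<^sup>2 / m)" unfolding chis_def
  proof (intro sum_mono)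
    fix a assume "a \<in> A"
    then show "(R a - Q a)\<^sup>2 / Q a \<le> (R a - Q a)\<^sup>2 / m" using m assms(2)
      by (intro divide_left_mono) auto
  qed
  also have "\<dots> \<le> (\<Sum>a\<in>A. \<bar>R a - Q a\<bar> * (S / 2) / m)"
  proof (intro sum_mono divide_right_mono)
    fix a assume a: "a \<in> A"
    have "2 * \<bar>R a - Q a\<bar> \<le> S" unfolding S_def using sum_abs_half[OF assms(1) a D0] .
    then have "\<bar>R a - Q a\<bar> * \<bar>R a - Q a\<bar> \<le> \<bar>R a - Q a\<bar> * (S / 2)"
      by (intro mult_left_mono) auto
    then show "(R a - Q a)\<^sup>2 \<le> \<bar>R a - Q a\<bar> * (S / 2)" by (simp add: power2_eq_square)
  qed (use m in auto)
  also have "\<dots> = S\<^sup>2 / (2 * m)" unfolding S_def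
    by (simp add: sum_divide_distrib[symmetric] sum_distrib_right[symmetric] power2_eq_square)
  also have "\<dots> \<le> (2 * kld A R Q) / (2 * m)" unfolding S_def
    using pinsker[OF assms(1-5) H] m by (intro divide_right_mono) auto
  finally show ?thesis by simp
qed

lemma logsum:
  fixes J T :: "'i \<Rightarrow> real"
  assumes "finite I" "\<forall>i\<in>I. J i \<ge> 0" "\<forall>i\<in>I. T i \<ge> 0" "\<forall>i\<in>I. J i > 0 \<longrightarrow> T i > 0"
  shows "sum J I * ln (sum J I / sum T I) \<le> (\<Sum>i\<in>I. J i * ln (J i / T i))"
proof (cases "sum J I = 0")
  case True
  then have "\<forall>i\<in>I. J i = 0" using assms(1,2) sum_nonneg_eq_0_iff by blast
  then show ?thesis using True by simp
next
  case False
  define SJ where "SJ = sum J I"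
  define ST where "ST = sum T I"
  have SJp: "SJ > 0" using False assms(2) sum_nonneg[of I J] unfolding SJ_def by force
  obtain i0 where i0: "i0 \<in> I" "J i0 > 0"
  proof -
    have "\<exists>i\<in>I. J i \<noteq> 0" using False by (meson sum.neutral)
    then show ?thesis using that assms(2) by force
  qed
  have STp: "ST > 0"
  proof -
    have "T i0 \<le> ST" unfolding ST_def using assms(1,3) i0 by (intro member_le_sum) auto
    then show ?thesis using assms(4) i0 by force
  qed
  have trm: "J i * ln (J i / T i) - J i * ln (SJ / ST) \<ge> J i - T i * SJ / ST" if i: "i \<in> I" for i
  proof (cases "J i = 0")
    case True
    then show ?thesis using assms(3) i SJp STp by simp
  next
    case False
    then have Jp: "J i > 0" using assms(2) i by force
    then have Tp: "T i > 0" using assms(4) i by auto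
    define x where "x = T i * SJ / (J i * ST)"
    have xp: "x > 0" unfolding x_def using Jp Tp SJp STp by simp
    have lnx: "ln x = ln (T i) + ln SJ - ln (J i) - ln ST"
      unfolding x_def using Jp Tp SJp STp by (simp add: ln_div ln_mult)
    have "ln (J i / T i) - ln (SJ / ST) = - ln x"
      unfolding lnx using Jp Tp SJp STp by (simp add: ln_div)
    moreover have "ln x \<le> x - 1" using ln_le_minus_one[OF xp] .
    ultimately have "J i * (ln (J i / T i) - ln (SJ / ST)) \<ge> J i * (1 - x)"
      using Jp by (intro mult_left_mono) auto
    moreover have "J i * (1 - x) = J i - T i * SJ / ST" unfolding x_def using Jp by (simp add: field_simps)
    ultimately show ?thesis by (simp add: right_diff_distrib)
  qed
  have "(\<Sum>i\<in>I. J i - T i * SJ / ST) \<le> (\<Sum>i\<in>I. J i * ln (J i / T i) - J i * ln (SJ / ST))"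
    using trm by (intro sum_mono) auto
  moreover have "(\<Sum>i\<in>I. J i - T i * SJ / ST) = 0"
    using STp by (simp add: sum_subtractf sum_divide_distrib[symmetric] sum_distrib_right[symmetric] SJ_def[symmetric] ST_def[symmetric])
  moreover have "(\<Sum>i\<in>I. J i * ln (J i / T i) - J i * ln (SJ / ST)) = (\<Sum>i\<in>I. J i * ln (J i / T i)) - SJ * ln (SJ / ST)"
    by (simp add: sum_subtractf sum_distrib_right[symmetric] SJ_def)
  ultimately show ?thesis unfolding SJ_def ST_def by linarith
qed

lemma chain:
  fixes R :: "'a \<Rightarrow> 'b \<Rightarrow> real" and P1 :: "'a \<Rightarrow> real" and P2 :: "'b \<Rightarrow> real"
  assumes "finite A" "finite B" "\<forall>a\<in>A. \<forall>b\<in>B. R a b \<ge> 0" "\<forall>a\<in>A. P1 a > 0" "\<forall>b\<in>B. P2 b > 0"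
  shows "(\<Sum>a\<in>A. \<Sum>b\<in>B. R a b * ln (R a b / (P1 a * P2 b)))
       = (\<Sum>a\<in>A. (\<Sum>b\<in>B. R a b) * ln ((\<Sum>b\<in>B. R a b) / P1 a))
         + (\<Sum>a\<in>A. \<Sum>b\<in>B. R a b * ln (R a b / ((\<Sum>b\<in>B. R a b) * P2 b)))"
proof -
  have "(\<Sum>a\<in>A. \<Sum>b\<in>B. R a b * ln (R a b / (P1 a * P2 b)))
      = (\<Sum>a\<in>A. \<Sum>b\<in>B. R a b * ln ((\<Sum>b\<in>B. R a b) / P1 a) + R a b * ln (R a b / ((\<Sum>b\<in>B. R a b) * P2 b)))"
  proof (intro sum.cong refl)
    fix a b assume a: "a \<in> A" and b: "b \<in> B"
    show "R a b * ln (R a b / (P1 a * P2 b)) = R a b * ln ((\<Sum>b\<in>B. R a b) / P1 a) + R a b * ln (R a b / ((\<Sum>b\<in>B. R a b) * P2 b))"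
    proof (cases "R a b = 0")
      case False
      have "0 \<le> R a b" using assms(3) a b by blast
      with False have Rp: "R a b > 0" by simp
      have "R a b \<le> (\<Sum>b\<in>B. R a b)" using assms(2,3) a b by (intro member_le_sum) auto
      then have rp: "(\<Sum>b\<in>B. R a b) > 0" using Rp by linarith
      have p1: "P1 a > 0" "P2 b > 0" using assms(4,5) a b by auto
      have "ln (R a b / (P1 a * P2 b)) = ln ((\<Sum>b\<in>B. R a b) / P1 a) + ln (R a b / ((\<Sum>b\<in>B. R a b) * P2 b))"
        using Rp rp p1 by (simp add: ln_div ln_mult)
      then show ?thesis by (simp add: distrib_left)
    qed simp
  qed
  also have "\<dots> = (\<Sum>a\<in>A. (\<Sum>b\<in>B. R a b) * ln ((\<Sum>b\<in>B. R a b) / P1 a))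
         + (\<Sum>a\<in>A. \<Sum>b\<in>B. R a b * ln (R a b / ((\<Sum>b\<in>B. R a b) * P2 b)))"
    by (simp add: sum.distrib sum_distrib_right)
  finally show ?thesis .
qed

definition pj :: "'a set \<Rightarrow> 'b set \<Rightarrow> ('a \<Rightarrow> 'c \<Rightarrow> real) \<Rightarrow> ('b \<Rightarrow> 'd \<Rightarrow> real) \<Rightarrow> ('a \<Rightarrow> 'b \<Rightarrow> real) \<Rightarrow> 'c \<Rightarrow> 'd \<Rightarrow> real" where
  "pj A1 A2 W1 W2 R c d = (\<Sum>a\<in>A1. \<Sum>b\<in>A2. R a b * W1 a c * W2 b d)"

lemma two_block:
  fixes A1 :: "'a set" and A2 :: "'b set" and B1 :: "'c set" and B2 :: "'d set"
    and P1 :: "'a \<Rightarrow> real" and P2 :: "'b \<Rightarrow> real" and W1 :: "'a \<Rightarrow> 'c \<Rightarrow> real" and W2 :: "'b \<Rightarrow> 'd \<Rightarrow> real"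
    and R :: "'a \<Rightarrow> 'b \<Rightarrow> real" and k :: real
  assumes fin: "finite A1" "finite A2" "finite B1" "finite B2"
    and P1p: "\<forall>a\<in>A1. P1 a > 0" and P2p: "\<forall>b\<in>A2. P2 b > 0"
    and W1n: "\<forall>a\<in>A1. \<forall>c\<in>B1. W1 a c \<ge> 0" and W1s: "\<forall>a\<in>A1. (\<Sum>c\<in>B1. W1 a c) = 1"
    and W2n: "\<forall>b\<in>A2. \<forall>d\<in>B2. W2 b d \<ge> 0" and W2s: "\<forall>b\<in>A2. (\<Sum>d\<in>B2. W2 b d) = 1"
    and Q1p: "\<forall>c\<in>B1. push A1 W1 P1 c > 0" and Q2p: "\<forall>d\<in>B2. push A2 W2 P2 d > 0"
    and k: "k \<ge> 0"
    and H1: "\<forall>R1. is_pmf_on A1 R1 \<longrightarrow> kld B1 (push A1 W1 R1) (push A1 W1 P1) \<le> k * kld A1 R1 P1"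
    and H2: "\<forall>R2. is_pmf_on A2 R2 \<longrightarrow> kld B2 (push A2 W2 R2) (push A2 W2 P2) \<le> k * kld A2 R2 P2"
    and Rn: "\<forall>a\<in>A1. \<forall>b\<in>A2. R a b \<ge> 0" and Rs: "(\<Sum>a\<in>A1. \<Sum>b\<in>A2. R a b) = 1"
  shows "(\<Sum>c\<in>B1. \<Sum>d\<in>B2. pj A1 A2 W1 W2 R c d * ln (pj A1 A2 W1 W2 R c d / (push A1 W1 P1 c * push A2 W2 P2 d)))
         \<le> k * (\<Sum>a\<in>A1. \<Sum>b\<in>A2. R a b * ln (R a b / (P1 a * P2 b)))"
proof -
  define Q where "Q = pj A1 A2 W1 W2 R"
  define Q1 where "Q1 = push A1 W1 P1"
  define Q2 where "Q2 = push A2 W2 P2"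
  define r where "r a = (\<Sum>b\<in>A2. R a b)" for a
  define q where "q c = (\<Sum>d\<in>B2. Q c d)" for c
  define s where "s c b = (\<Sum>a\<in>A1. R a b * W1 a c)" for c b
  have Qn: "Q c d \<ge> 0" if "c \<in> B1" "d \<in> B2" for c d
    unfolding Q_def pj_def using that Rn W1n W2n by (intro sum_nonneg mult_nonneg_nonneg) auto
  have rn: "r a \<ge> 0" if "a \<in> A1" for a unfolding r_def using that Rn by (intro sum_nonneg) auto
  have sn: "s c b \<ge> 0" if "c \<in> B1" "b \<in> A2" for c b
    unfolding s_def using that Rn W1n by (intro sum_nonneg mult_nonneg_nonneg) auto
  have qeq: "q c = (\<Sum>a\<in>A1. r a * W1 a c)" if c: "c \<in> B1" for c
  proof -
    have "q c = (\<Sum>d\<in>B2. \<Sum>a\<in>A1. \<Sum>b\<in>A2. R a b * W1 a c * W2 b d)"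
      unfolding q_def Q_def pj_def ..
    also have "\<dots> = (\<Sum>a\<in>A1. \<Sum>b\<in>A2. \<Sum>d\<in>B2. R a b * W1 a c * W2 b d)"
      by (subst sum.swap) (simp add: sum.swap[of _ B2 A2])
    also have "\<dots> = (\<Sum>a\<in>A1. \<Sum>b\<in>A2. R a b * W1 a c * (\<Sum>d\<in>B2. W2 b d))"
      by (simp add: sum_distrib_left)
    also have "\<dots> = (\<Sum>a\<in>A1. \<Sum>b\<in>A2. R a b * W1 a c)"
      using W2s by simp
    also have "\<dots> = (\<Sum>a\<in>A1. r a * W1 a c)" unfolding r_def by (simp add: sum_distrib_right)
    finally show ?thesis .
  qed
  have ssum: "(\<Sum>b\<in>A2. s c b) = q c" if c: "c \<in> B1" for c
  proof -
    have "(\<Sum>b\<in>A2. s c b) = (\<Sum>a\<in>A1. \<Sum>b\<in>A2. R a b * W1 a c)"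
      unfolding s_def by (rule sum.swap)
    also have "\<dots> = q c" unfolding qeq[OF c] r_def by (simp add: sum_distrib_right)
    finally show ?thesis .
  qed
  have Qeq: "Q c d = (\<Sum>b\<in>A2. s c b * W2 b d)" for c d
  proof -
    have "Q c d = (\<Sum>a\<in>A1. \<Sum>b\<in>A2. R a b * W1 a c * W2 b d)" unfolding Q_def pj_def ..
    also have "\<dots> = (\<Sum>b\<in>A2. \<Sum>a\<in>A1. R a b * W1 a c * W2 b d)" by (rule sum.swap)
    also have "\<dots> = (\<Sum>b\<in>A2. s c b * W2 b d)" unfolding s_def by (simp add: sum_distrib_right)
    finally show ?thesis .
  qed
  have out: "(\<Sum>c\<in>B1. \<Sum>d\<in>B2. Q c d * ln (Q c d / (Q1 c * Q2 d)))
      = (\<Sum>c\<in>B1. q c * ln (q c / Q1 c)) + (\<Sum>c\<in>B1. \<Sum>d\<in>B2. Q c d * ln (Q c d / (q c * Q2 d)))"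
    unfolding q_def using chain[of B1 B2 Q Q1 Q2] fin Qn Q1p Q2p unfolding Q1_def Q2_def by auto
  have d1: "(\<Sum>c\<in>B1. q c * ln (q c / Q1 c)) \<le> k * kld A1 r P1"
  proof -
    have "is_pmf_on A1 r" unfolding is_pmf_on_def using rn Rs unfolding r_def by auto
    then have "kld B1 (push A1 W1 r) Q1 \<le> k * kld A1 r P1" using H1 unfolding Q1_def by auto
    moreover have "kld B1 (push A1 W1 r) Q1 = (\<Sum>c\<in>B1. q c * ln (q c / Q1 c))"
      unfolding kld_def push_def using qeq by (intro sum.cong refl) auto
    ultimately show ?thesis by simp
  qed
  have d2: "(\<Sum>d\<in>B2. Q c d * ln (Q c d / (q c * Q2 d))) \<le> k * (\<Sum>b\<in>A2. s c b * ln (s c b / (q c * P2 b)))"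
    if c: "c \<in> B1" for c
  proof (cases "q c = 0")
    case True
    then have "\<forall>d\<in>B2. Q c d = 0" unfolding q_def using sum_nonneg_eq_0_iff[OF fin(4)] Qn c by blast
    moreover have "\<forall>b\<in>A2. s c b = 0" using ssum[OF c] True sum_nonneg_eq_0_iff[OF fin(2)] sn c by metis
    ultimately show ?thesis by simp
  next
    case False
    then have qp: "q c > 0" using c unfolding q_def using Qn sum_nonneg[of B2 "Q c"] by force
    define s' where "s' b = s c b / q c" for b
    have "is_pmf_on A2 s'" unfolding is_pmf_on_def s'_def
      using sn c qp ssum[OF c] by (auto simp: sum_divide_distrib[symmetric])
    then have H: "kld B2 (push A2 W2 s') Q2 \<le> k * kld A2 s' P2" using H2 unfolding Q2_def by auto
    have pe: "push A2 W2 s' d = Q c d / q c" for d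
      unfolding push_def s'_def Qeq by (simp add: sum_divide_distrib[symmetric])
    have e1: "kld B2 (push A2 W2 s') Q2 = (\<Sum>d\<in>B2. Q c d * ln (Q c d / (q c * Q2 d))) / q c"
      unfolding kld_def pe sum_divide_distrib by (intro sum.cong refl) (simp add: field_simps)
    have e2: "kld A2 s' P2 = (\<Sum>b\<in>A2. s c b * ln (s c b / (q c * P2 b))) / q c"
      unfolding kld_def s'_def sum_divide_distrib by (intro sum.cong refl) (simp add: field_simps)
    from H have "(\<Sum>d\<in>B2. Q c d * ln (Q c d / (q c * Q2 d))) / q c \<le> (k * (\<Sum>b\<in>A2. s c b * ln (s c b / (q c * P2 b)))) / q c"
      unfolding e1 e2 by simp
    then show ?thesis using qp by (simp add: divide_le_cancel)
  qed
  have d3: "(\<Sum>c\<in>B1. \<Sum>b\<in>A2. s c b * ln (s c b / (q c * P2 b))) \<le> (\<Sum>a\<in>A1. \<Sum>b\<in>A2. R a b * ln (R a b / (r a * P2 b)))"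
  proof -
    have "(\<Sum>c\<in>B1. \<Sum>b\<in>A2. s c b * ln (s c b / (q c * P2 b)))
        \<le> (\<Sum>c\<in>B1. \<Sum>b\<in>A2. \<Sum>a\<in>A1. (R a b * W1 a c) * ln ((R a b * W1 a c) / (r a * W1 a c * P2 b)))"
    proof (intro sum_mono)
      fix c b assume c: "c \<in> B1" and b: "b \<in> A2"
      have sT: "(\<Sum>a\<in>A1. r a * W1 a c * P2 b) = q c * P2 b" unfolding qeq[OF c] by (simp add: sum_distrib_right)
      have "(\<Sum>a\<in>A1. R a b * W1 a c) * ln ((\<Sum>a\<in>A1. R a b * W1 a c) / (\<Sum>a\<in>A1. r a * W1 a c * P2 b))
          \<le> (\<Sum>a\<in>A1. (R a b * W1 a c) * ln ((R a b * W1 a c) / (r a * W1 a c * P2 b)))"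
      proof (rule logsum[OF fin(1)])
        show "\<forall>i\<in>A1. 0 \<le> R i b * W1 i c" using Rn W1n b c by auto
        show "\<forall>i\<in>A1. 0 \<le> r i * W1 i c * P2 b" 
        proof
          fix i assume i: "i \<in> A1"
          have "r i \<ge> 0" "W1 i c \<ge> 0" "P2 b > 0" using rn W1n P2p b c i by auto
          then show "0 \<le> r i * W1 i c * P2 b" by simp
        qed
        show "\<forall>i\<in>A1. 0 < R i b * W1 i c \<longrightarrow> 0 < r i * W1 i c * P2 b"
        proof (intro ballI impI)
          fix i assume i: "i \<in> A1" and pos: "0 < R i b * W1 i c"
          have "R i b \<ge> 0" "W1 i c \<ge> 0" using Rn W1n i b c by auto
          with pos have "R i b > 0" "W1 i c > 0" by (auto simp: zero_less_mult_iff)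
          moreover have "R i b \<le> r i" unfolding r_def using fin(2) Rn i b by (intro member_le_sum) auto
          ultimately show "0 < r i * W1 i c * P2 b" using P2p b by auto
        qed
      qed
      then show "s c b * ln (s c b / (q c * P2 b)) \<le> (\<Sum>a\<in>A1. (R a b * W1 a c) * ln ((R a b * W1 a c) / (r a * W1 a c * P2 b)))"
        unfolding s_def sT .
    qed
    also have "\<dots> = (\<Sum>c\<in>B1. \<Sum>b\<in>A2. \<Sum>a\<in>A1. W1 a c * (R a b * ln (R a b / (r a * P2 b))))"
    proof (intro sum.cong refl)
      fix c b a assume c: "c \<in> B1" and b: "b \<in> A2" and a: "a \<in> A1"
      show "(R a b * W1 a c) * ln ((R a b * W1 a c) / (r a * W1 a c * P2 b)) = W1 a c * (R a b * ln (R a b / (r a * P2 b)))"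
        by (cases "W1 a c = 0") (simp_all add: field_simps)
    qed
    also have "\<dots> = (\<Sum>b\<in>A2. \<Sum>c\<in>B1. \<Sum>a\<in>A1. W1 a c * (R a b * ln (R a b / (r a * P2 b))))" by (rule sum.swap)
    also have "\<dots> = (\<Sum>b\<in>A2. \<Sum>a\<in>A1. \<Sum>c\<in>B1. W1 a c * (R a b * ln (R a b / (r a * P2 b))))" by (intro sum.cong refl) (rule sum.swap)
    also have "\<dots> = (\<Sum>a\<in>A1. \<Sum>b\<in>A2. \<Sum>c\<in>B1. W1 a c * (R a b * ln (R a b / (r a * P2 b))))" by (rule sum.swap)
    also have "\<dots> = (\<Sum>a\<in>A1. \<Sum>b\<in>A2. (\<Sum>c\<in>B1. W1 a c) * (R a b * ln (R a b / (r a * P2 b))))"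
      by (simp add: sum_distrib_right)
    also have "\<dots> = (\<Sum>a\<in>A1. \<Sum>b\<in>A2. R a b * ln (R a b / (r a * P2 b)))"
      using W1s by simp
    finally show ?thesis .
  qed
  have inp: "(\<Sum>a\<in>A1. \<Sum>b\<in>A2. R a b * ln (R a b / (P1 a * P2 b)))
      = kld A1 r P1 + (\<Sum>a\<in>A1. \<Sum>b\<in>A2. R a b * ln (R a b / (r a * P2 b)))"
    unfolding kld_def r_def using chain[of A1 A2 R P1 P2] fin Rn P1p P2p by auto
  have "(\<Sum>c\<in>B1. \<Sum>d\<in>B2. Q c d * ln (Q c d / (Q1 c * Q2 d)))
     \<le> k * kld A1 r P1 + (\<Sum>c\<in>B1. k * (\<Sum>b\<in>A2. s c b * ln (s c b / (q c * P2 b))))"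
    unfolding out using d1 d2 by (intro add_mono sum_mono) auto
  also have "\<dots> \<le> k * kld A1 r P1 + k * (\<Sum>a\<in>A1. \<Sum>b\<in>A2. R a b * ln (R a b / (r a * P2 b)))"
    using d3 k by (simp add: sum_distrib_left[symmetric] mult_left_mono)
  also have "\<dots> = k * (\<Sum>a\<in>A1. \<Sum>b\<in>A2. R a b * ln (R a b / (P1 a * P2 b)))"
    unfolding inp by (simp add: distrib_left)
  finally show ?thesis unfolding Q_def Q1_def Q2_def .
qed

lemma kl_pert:
  fixes Q g :: "'a \<Rightarrow> real"
  assumes "finite S" "\<forall>a\<in>S. Q a > 0" "(\<Sum>a\<in>S. g a) = 0" "\<forall>a\<in>S. \<bar>g a / Q a\<bar> \<le> 1/2"
  shows "(\<Sum>a\<in>S. Q a * ((1 - \<bar>g a / Q a\<bar>) * (g a / Q a)\<^sup>2 / 2)) \<le> kld S (\<lambda>a. Q a + g a) Q"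
    and "kld S (\<lambda>a. Q a + g a) Q \<le> (\<Sum>a\<in>S. Q a * ((1 + 2 * \<bar>g a / Q a\<bar>) * (g a / Q a)\<^sup>2 / 2))"
proof -
  have eq: "kld S (\<lambda>a. Q a + g a) Q = (\<Sum>a\<in>S. Q a * ((1 + g a / Q a) * ln (1 + g a / Q a) - g a / Q a))"
  proof -
    have "kld S (\<lambda>a. Q a + g a) Q = (\<Sum>a\<in>S. Q a * ((1 + g a / Q a) * ln (1 + g a / Q a) - g a / Q a) + g a)"
      unfolding kld_def using assms(2) by (intro sum.cong refl) (auto simp: field_simps)
    also have "\<dots> = (\<Sum>a\<in>S. Q a * ((1 + g a / Q a) * ln (1 + g a / Q a) - g a / Q a))"
      using assms(3) by (simp add: sum.distrib)
    finally show ?thesis .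
  qed
  show "(\<Sum>a\<in>S. Q a * ((1 - \<bar>g a / Q a\<bar>) * (g a / Q a)\<^sup>2 / 2)) \<le> kld S (\<lambda>a. Q a + g a) Q"
    unfolding eq using assms(2,4) by (intro sum_mono mult_left_mono psi_lower) auto
  show "kld S (\<lambda>a. Q a + g a) Q \<le> (\<Sum>a\<in>S. Q a * ((1 + 2 * \<bar>g a / Q a\<bar>) * (g a / Q a)\<^sup>2 / 2))"
    unfolding eq using assms(2,4) by (intro sum_mono mult_left_mono psi_upper) auto
qed

lemma kl_pert_bounds:
  fixes Q d :: "'a \<Rightarrow> real"
  assumes "finite S" "\<forall>a\<in>S. Q a > 0" "(\<Sum>a\<in>S. d a) = 0" "\<forall>a\<in>S. \<bar>d a / Q a\<bar> \<le> K"
    and e: "0 < e" "e * K \<le> 1/2"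
  shows "(1 - e * K) * e\<^sup>2 / 2 * chis S (\<lambda>a. Q a + d a) Q \<le> kld S (\<lambda>a. Q a + e * d a) Q"
    and "kld S (\<lambda>a. Q a + e * d a) Q \<le> (1 + 2 * e * K) * e\<^sup>2 / 2 * chis S (\<lambda>a. Q a + d a) Q"
proof -
  have K0: "K \<ge> 0" if "S \<noteq> {}" using assms(4) that by (meson abs_ge_zero all_not_in_conv order_trans)
  have g0: "(\<Sum>a\<in>S. e * d a) = 0" using assms(3) by (simp add: sum_distrib_left[symmetric])
  have gb: "\<forall>a\<in>S. \<bar>e * d a / Q a\<bar> \<le> 1/2"
  proof
    fix a assume a: "a \<in> S"
    have "\<bar>e * d a / Q a\<bar> = e * \<bar>d a / Q a\<bar>" using e by (simp add: abs_mult)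
    also have "\<dots> \<le> e * K" using assms(4) a e by (intro mult_left_mono) auto
    finally show "\<bar>e * d a / Q a\<bar> \<le> 1/2" using e by linarith
  qed
  have chi: "chis S (\<lambda>a. Q a + d a) Q = (\<Sum>a\<in>S. Q a * (d a / Q a)\<^sup>2)"
    unfolding chis_def using assms(2) by (intro sum.cong refl) (auto simp: field_simps power2_eq_square)
  note kp = kl_pert[OF assms(1,2) g0 gb]
  have "(1 - e * K) * e\<^sup>2 / 2 * chis S (\<lambda>a. Q a + d a) Q
      = (\<Sum>a\<in>S. (1 - e * K) * e\<^sup>2 / 2 * (Q a * (d a / Q a)\<^sup>2))"
    unfolding chi by (simp add: sum_distrib_left)
  also have "\<dots> = (\<Sum>a\<in>S. Q a * ((1 - e * K) * (e * d a / Q a)\<^sup>2 / 2))"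
    using assms(2) by (intro sum.cong refl) (auto simp: field_simps power2_eq_square)
  also have "\<dots> \<le> (\<Sum>a\<in>S. Q a * ((1 - \<bar>e * d a / Q a\<bar>) * (e * d a / Q a)\<^sup>2 / 2))"
  proof (intro sum_mono mult_left_mono divide_right_mono mult_right_mono)
    fix a assume a: "a \<in> S"
    have "\<bar>e * d a / Q a\<bar> = e * \<bar>d a / Q a\<bar>" using e by (simp add: abs_mult)
    also have "\<dots> \<le> e * K" using assms(4) a e by (intro mult_left_mono) auto
    finally show "1 - e * K \<le> 1 - \<bar>e * d a / Q a\<bar>" by linarith
    show "0 \<le> Q a" using a assms(2) by auto
  qed auto
  also have "\<dots> \<le> kld S (\<lambda>a. Q a + e * d a) Q" using kp(1) .
  finally show "(1 - e * K) * e\<^sup>2 / 2 * chis S (\<lambda>a. Q a + d a) Q \<le> kld S (\<lambda>a. Q a + e * d a) Q" .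
  have "kld S (\<lambda>a. Q a + e * d a) Q \<le> (\<Sum>a\<in>S. Q a * ((1 + 2 * \<bar>e * d a / Q a\<bar>) * (e * d a / Q a)\<^sup>2 / 2))"
    using kp(2) .
  also have "\<dots> \<le> (\<Sum>a\<in>S. Q a * ((1 + 2 * e * K) * (e * d a / Q a)\<^sup>2 / 2))"
  proof (intro sum_mono mult_left_mono divide_right_mono mult_right_mono)
    fix a assume a: "a \<in> S"
    have "\<bar>e * d a / Q a\<bar> = e * \<bar>d a / Q a\<bar>" using e by (simp add: abs_mult)
    also have "\<dots> \<le> e * K" using assms(4) a e by (intro mult_left_mono) auto
    finally show "1 + 2 * \<bar>e * d a / Q a\<bar> \<le> 1 + 2 * e * K" by linarith
    show "0 \<le> Q a" using a assms(2) by auto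
  qed auto
  also have "\<dots> = (\<Sum>a\<in>S. (1 + 2 * e * K) * e\<^sup>2 / 2 * (Q a * (d a / Q a)\<^sup>2))"
    using assms(2) by (intro sum.cong refl) (auto simp: field_simps power2_eq_square)
  also have "\<dots> = (1 + 2 * e * K) * e\<^sup>2 / 2 * chis S (\<lambda>a. Q a + d a) Q"
    unfolding chi by (simp add: sum_distrib_left)
  finally show "kld S (\<lambda>a. Q a + e * d a) Q \<le> (1 + 2 * e * K) * e\<^sup>2 / 2 * chis S (\<lambda>a. Q a + d a) Q" .
qed

lemma perturb:
  fixes A :: "'a set" and B :: "'b set" and Q R :: "'a \<Rightarrow> real" and W :: "'a \<Rightarrow> 'b \<Rightarrow> real" and L :: ereal
  assumes fin: "finite A" "finite B" and Qp: "\<forall>a\<in>A. Q a > 0" and Qs: "sum Q A = 1"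
    and Wn: "\<forall>a\<in>A. \<forall>b\<in>B. W a b \<ge> 0" and Ws: "\<forall>a\<in>A. (\<Sum>b\<in>B. W a b) = 1"
    and QWp: "\<forall>b\<in>B. push A W Q b > 0"
    and Rn: "\<forall>a\<in>A. R a \<ge> 0" and Rs: "sum R A = 1" and chi: "chis A R Q > 0"
    and HL: "\<forall>R'. is_pmf_on A R' \<and> kld A R' Q > 0 \<longrightarrow> ereal (kld B (push A W R') (push A W Q) / kld A R' Q) \<le> L"
  shows "ereal (chis B (push A W R) (push A W Q) / chis A R Q) \<le> L"
proof -
  define QW where "QW = push A W Q"
  define d where "d a = R a - Q a" for a
  define ee where "ee b = push A W R b - QW b" for b
  define K where "K = (\<Sum>a\<in>A. \<bar>d a / Q a\<bar>) + (\<Sum>b\<in>B. \<bar>ee b / QW b\<bar>) + 1"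
  define X where "X = chis A R Q"
  define Y where "Y = chis B (push A W R) QW"
  have S1: "(\<Sum>a\<in>A. \<bar>d a / Q a\<bar>) \<ge> 0" "(\<Sum>b\<in>B. \<bar>ee b / QW b\<bar>) \<ge> 0" by (auto intro!: sum_nonneg)
  have Kp: "K \<ge> 1" unfolding K_def using S1 by linarith
  have dK: "\<forall>a\<in>A. \<bar>d a / Q a\<bar> \<le> K"
  proof
    fix a assume "a \<in> A"
    then have "\<bar>d a / Q a\<bar> \<le> (\<Sum>a\<in>A. \<bar>d a / Q a\<bar>)" using fin by (intro member_le_sum) auto
    then show "\<bar>d a / Q a\<bar> \<le> K" unfolding K_def using S1 by linarith
  qed
  have eK: "\<forall>b\<in>B. \<bar>ee b / QW b\<bar> \<le> K"
  proof
    fix b assume "b \<in> B"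
    then have "\<bar>ee b / QW b\<bar> \<le> (\<Sum>b\<in>B. \<bar>ee b / QW b\<bar>)" using fin by (intro member_le_sum) auto
    then show "\<bar>ee b / QW b\<bar> \<le> K" unfolding K_def using S1 by linarith
  qed
  have d0: "(\<Sum>a\<in>A. d a) = 0" unfolding d_def using Rs Qs by (simp add: sum_subtractf)
  have eeq: "ee b = (\<Sum>a\<in>A. d a * W a b)" for b
    unfolding ee_def QW_def push_def d_def by (simp add: sum_subtractf left_diff_distrib)
  have e0: "(\<Sum>b\<in>B. ee b) = 0"
  proof -
    have "(\<Sum>b\<in>B. ee b) = (\<Sum>a\<in>A. \<Sum>b\<in>B. d a * W a b)" unfolding eeq by (rule sum.swap)
    also have "\<dots> = (\<Sum>a\<in>A. d a)" using Ws by (simp add: sum_distrib_left[symmetric])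
    finally show ?thesis using d0 by simp
  qed
  have Xeq: "X = chis A (\<lambda>a. Q a + d a) Q" unfolding X_def d_def by simp
  have Yeq: "Y = chis B (\<lambda>b. QW b + ee b) QW" unfolding Y_def ee_def by simp
  have Y0: "Y \<ge> 0" unfolding Y_def using QWp QW_def chis_nonneg by blast
  have Xp: "X > 0" using chi X_def by simp
  have pushe: "push A W (\<lambda>a. Q a + e * d a) = (\<lambda>b. QW b + e * ee b)" for e
    unfolding push_def QW_def eeq by (simp add: sum.distrib distrib_right sum_distrib_left mult.assoc)
  define g where "g e = (1 - e * K) * Y / ((1 + 2 * e * K) * X)" for e
  have bound: "ereal (g e) \<le> L" if e: "0 < e" "e < 1 / (2 * K)" for e
  proof -
    have eK2: "e * K \<le> 1/2" using e Kp by (simp add: field_simps)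
    have e1: "e \<le> 1/2" using eK2 Kp e mult_left_mono[of 1 K e] by linarith
    have pmf: "is_pmf_on A (\<lambda>a. Q a + e * d a)"
    proof -
      have "\<forall>a\<in>A. 0 \<le> Q a + e * d a"
      proof
        fix a assume a: "a \<in> A"
        have "Q a + e * d a = (1 - e) * Q a + e * R a" unfolding d_def by (simp add: algebra_simps)
        also have "\<dots> \<ge> 0" using a Qp Rn e e1 by (intro add_nonneg_nonneg mult_nonneg_nonneg) auto
        finally show "0 \<le> Q a + e * d a" .
      qed
      moreover have "(\<Sum>a\<in>A. Q a + e * d a) = 1" using Qs d0 by (simp add: sum.distrib sum_distrib_left[symmetric])
      ultimately show ?thesis unfolding is_pmf_on_def by simp
    qed
    note kA = kl_pert_bounds[OF fin(1) Qp d0 dK e(1) eK2]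
    have QWp': "\<forall>b\<in>B. QW b > 0" using QWp QW_def by simp
    note kB = kl_pert_bounds[OF fin(2) QWp' e0 eK e(1) eK2]
    have lowA: "(1 - e * K) * e\<^sup>2 / 2 * X > 0" unfolding Xeq[symmetric] using eK2 e Xp by simp
    have kAp: "kld A (\<lambda>a. Q a + e * d a) Q > 0" using kA(1) lowA unfolding Xeq[symmetric] by linarith
    have "ereal (kld B (push A W (\<lambda>a. Q a + e * d a)) (push A W Q) / kld A (\<lambda>a. Q a + e * d a) Q) \<le> L"
      using HL pmf kAp by blast
    moreover have "g e \<le> kld B (push A W (\<lambda>a. Q a + e * d a)) (push A W Q) / kld A (\<lambda>a. Q a + e * d a) Q"
    proof -
      have lw: "(1 - e * K) * e\<^sup>2 / 2 * Y \<le> kld B (\<lambda>b. QW b + e * ee b) QW" using kB(1) Yeq by simp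
      have lw0: "0 \<le> (1 - e * K) * e\<^sup>2 / 2 * Y" using eK2 Y0 by simp
      have up: "kld A (\<lambda>a. Q a + e * d a) Q \<le> (1 + 2 * e * K) * e\<^sup>2 / 2 * X" using kA(2) Xeq by simp
      have "((1 - e * K) * e\<^sup>2 / 2 * Y) / ((1 + 2 * e * K) * e\<^sup>2 / 2 * X)
          \<le> kld B (\<lambda>b. QW b + e * ee b) QW / kld A (\<lambda>a. Q a + e * d a) Q"
        by (rule frac_le) (use lw lw0 up kAp in auto)
      moreover have "((1 - e * K) * e\<^sup>2 / 2 * Y) / ((1 + 2 * e * K) * e\<^sup>2 / 2 * X) = g e"
      proof -
        have n: "(1 - e * K) * e\<^sup>2 / 2 * Y = (e\<^sup>2 / 2) * ((1 - e * K) * Y)" by (simp add: algebra_simps)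
        have dd: "(1 + 2 * e * K) * e\<^sup>2 / 2 * X = (e\<^sup>2 / 2) * ((1 + 2 * e * K) * X)" by (simp add: algebra_simps)
        have "e\<^sup>2 / 2 \<noteq> 0" using e by simp
        then show ?thesis unfolding n dd g_def by (rule mult_divide_mult_cancel_left)
      qed
      ultimately show ?thesis unfolding pushe QW_def by simp
    qed
    ultimately show ?thesis by (meson ereal_less_eq(3) order_trans)
  qed
  have ev: "eventually (\<lambda>e. ereal (g e) \<le> L) (at_right 0)"
    by (rule eventually_at_rightI[of 0 "1 / (2 * K)"]) (use bound Kp in auto)
  have "((\<lambda>e. (1 - e * K) * Y / ((1 + 2 * e * K) * X)) \<longlongrightarrow> (1 - 0 * K) * Y / ((1 + 2 * 0 * K) * X)) (at_right 0)"
    using Xp by (intro tendsto_intros) auto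
  then have "(g \<longlongrightarrow> Y / X) (at_right 0)" unfolding g_def by simp
  then have "((\<lambda>e. ereal (g e)) \<longlongrightarrow> ereal (Y / X)) (at_right 0)" by (rule tendsto_ereal)
  then have "ereal (Y / X) \<le> L" by (rule tendsto_upperbound) (use ev in auto)
  then show ?thesis unfolding X_def Y_def QW_def .
qed

lemma hom_eq:
  fixes f :: "real \<Rightarrow> real"
  assumes hom: "fent_homogeneous f0 f" and c: "c > 0" and q: "0 < q" "q < 1"
  shows "(f c * q + f0 * (1 - q)) - f (c * q) = c * ((f 1 * q + f0 * (1 - q)) - f q)"
proof -
  define p where "p = map_pmf (\<lambda>b. if b then (1::real) else 0) (bernoulli_pmf q)"
  define M where "M = measure_pmf p"
  have fin: "finite (set_pmf p)" unfolding p_def by simp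
  have int: "integrable M g" for g :: "real \<Rightarrow> real" unfolding M_def using fin by (rule integrable_measure_pmf_finite)
  have I: "(\<integral>x. g x \<partial>M) = g 1 * q + g 0 * (1 - q)" for g :: "real \<Rightarrow> real"
    unfolding M_def p_def using q by (simp add: integral_map_pmf)
  have "prob_space M \<and> (\<lambda>x. \<bar>x\<bar>) \<in> borel_measurable M \<and> (\<forall>x\<in>space M. 0 \<le> \<bar>x\<bar>) \<and> 0 < c \<and>
        integrable M (\<lambda>x. \<bar>x\<bar>) \<and> integrable M (\<lambda>x. fext f0 f \<bar>x\<bar>) \<and>
        integrable M (\<lambda>x. fext f0 f (c * \<bar>x\<bar>))"
    using c int unfolding M_def by (auto simp: prob_space_measure_pmf)
  then have "fent f0 f M (\<lambda>x. c * \<bar>x\<bar>) = c * fent f0 f M (\<lambda>x. \<bar>x\<bar>)"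
    using hom unfolding fent_homogeneous_def by blast
  moreover have "fent f0 f M (\<lambda>x. c * \<bar>x\<bar>) = (f c * q + f0 * (1 - q)) - f (c * q)"
    unfolding fent_def I using c q by (simp add: fext_def)
  moreover have "fent f0 f M (\<lambda>x. \<bar>x\<bar>) = (f 1 * q + f0 * (1 - q)) - f q"
    unfolding fent_def I using c q by (simp add: fext_def)
  ultimately show ?thesis by simp
qed

lemma f_form:
  fixes f :: "real \<Rightarrow> real"
  assumes hom: "fent_homogeneous f0 f" and f1: "f 1 = 0" and td: "thrice_diff_at f 1"
  shows "\<forall>t>0. f t = (deriv f 1 + f0) * t * ln t + f0 * (1 - t)"
proof -
  define L where "L x = (f x - f0) / x + f0" for x
  have fL: "f x = f0 + x * (L x - f0)" if "x > 0" for x unfolding L_def using that by simp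
  have L1: "L 1 = 0" unfolding L_def using f1 by simp
  have Lm1: "L (c * q) = L c + L q" if c: "c > 0" and q: "0 < q" "q < 1" for c q
  proof -
    have "(f c * q + f0 * (1 - q)) - f (c * q) = c * ((f 1 * q + f0 * (1 - q)) - f q)"
      by (rule hom_eq[OF hom c q])
    then have "(f0 + c * (L c - f0)) * q + f0 * (1 - q) - (f0 + (c * q) * (L (c * q) - f0))
        = c * ((f0 + 1 * (L 1 - f0)) * q + f0 * (1 - q) - (f0 + q * (L q - f0)))"
      using fL[of c] fL[of q] fL[of "c * q"] fL[of 1] c q by simp
    then have "c * q * (L c - L (c * q)) = c * q * (L 1 - L q)" by (simp add: algebra_simps)
    then have "L c - L (c * q) = L 1 - L q" using c q by simp
    then show ?thesis using L1 by simp
  qed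
  have Linv: "L (1 / q) = - L q" if q: "q > 0" for q
  proof (cases "q < 1")
    case True
    have "L ((1 / q) * q) = L (1 / q) + L q" using Lm1[of "1/q" q] q True by simp
    then show ?thesis using q L1 by simp
  next
    case False
    show ?thesis
    proof (cases "q = 1")
      case True then show ?thesis using L1 by simp
    next
      case False
      then have "q > 1" using \<open>\<not> q < 1\<close> by simp
      then have "L (q * (1 / q)) = L q + L (1 / q)" using Lm1[of q "1/q"] by simp
      then show ?thesis using q L1 by simp
    qed
  qed
  have Lm: "L (c * q) = L c + L q" if c: "c > 0" and q: "q > 0" for c q
  proof -
    consider "q < 1" | "q = 1" | "q > 1" by linarith
    then show ?thesis
    proof cases
      case 1 then show ?thesis using Lm1 c q by simp
    next
      case 2 then show ?thesis using L1 by simp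
    next
      case 3
      have "L ((c * q) * (1 / q)) = L (c * q) + L (1 / q)" using Lm1[of "c * q" "1/q"] c q 3 by simp
      then show ?thesis using Linv[OF q] c q by simp
    qed
  qed
  define D where "D = deriv f 1"
  obtain e where e: "e > 0" "\<forall>x. \<bar>x - 1\<bar> < e \<longrightarrow> f differentiable (at x)"
    using td unfolding thrice_diff_at_def by blast
  have "f differentiable (at 1)" using e by simp
  then have fD: "(f has_real_derivative D) (at 1)" unfolding D_def
    using DERIV_deriv_iff_real_differentiable by blast
  define a where "a = D + f0"
  have LD1: "(L has_real_derivative a) (at 1)"
  proof -
    have "((\<lambda>x. (f x - f0) / x + f0) has_real_derivative ((D - 0) * 1 - (f 1 - f0) * 1) / (1 * 1) + 0) (at 1)"
      by (intro derivative_intros fD) auto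
    then show ?thesis unfolding L_def a_def using f1 by (simp add: fun_eq_iff)
  qed
  have LD: "(L has_real_derivative a / y) (at y)" if y: "y > 0" for y
  proof -
    have "((\<lambda>z. L y + L (z / y)) has_real_derivative (0 + a * (1 / y))) (at y)"
    proof (intro derivative_intros DERIV_chain2[of L])
      show "(L has_real_derivative a) (at (y / y))" using LD1 y by simp
      show "((\<lambda>z. z / y) has_real_derivative 1 / y) (at y)"
        using DERIV_cdivide[OF DERIV_ident, of y] by simp
    qed
    then have "((\<lambda>z. L y + L (z / y)) has_real_derivative a / y) (at y)" by simp
    then show ?thesis
    proof (rule has_field_derivative_transform_within_open[where S = "{0<..}"])
      show "open {0::real<..}" by simp
      show "y \<in> {0<..}" using y by simp
      fix z :: real assume "z \<in> {0<..}"
      then have z: "z > 0" by simp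
      have "L (y * (z / y)) = L y + L (z / y)" using Lm[of y "z / y"] y z by simp
      then show "L y + L (z / y) = L z" using y by simp
    qed
  qed
  have "\<exists>k. \<forall>x\<in>{0<..}. L x - a * ln x = (k::real)"
  proof (rule has_field_derivative_zero_constant)
    show "convex {0::real<..}" by (rule convex_real_interval)
    fix x :: real assume "x \<in> {0<..}"
    then have x: "x > 0" by simp
    have "((\<lambda>x. L x - a * ln x) has_real_derivative (a / x - a * inverse x)) (at x)"
      by (rule DERIV_diff[OF LD[OF x] DERIV_cmult[OF DERIV_ln[OF x]]])
    moreover have "a / x - a * inverse x = 0" by (simp add: divide_inverse)
    ultimately have "((\<lambda>x. L x - a * ln x) has_real_derivative 0) (at x)" by simp
    then show "((\<lambda>x. L x - a * ln x) has_real_derivative 0) (at x within {0<..})"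
      by (rule has_field_derivative_at_within)
  qed
  then obtain k where k: "\<forall>x\<in>{0<..}. L x - a * ln x = k" by blast
  have "k = 0" using k[rule_format, of 1] L1 by simp
  then have Lln: "L x = a * ln x" if "x > 0" for x using k that by auto
  show ?thesis
  proof (intro allI impI)
    fix t :: real assume t: "t > 0"
    show "f t = (deriv f 1 + f0) * t * ln t + f0 * (1 - t)"
      using fL[OF t] Lln[OF t] unfolding a_def D_def by (simp add: algebra_simps)
  qed
qed

lemma f_derivs:
  fixes f :: "real \<Rightarrow> real"
  assumes form: "\<forall>t>0. f t = a * t * ln t + f0 * (1 - t)"
  shows "deriv f 1 = a - f0" "deriv (deriv f) 1 = a" "deriv (deriv (deriv f)) 1 = - a"
proof -
  have d1: "(f has_real_derivative a * (ln t + 1) - f0) (at t)" if t: "t > 0" for t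
  proof -
    have "((\<lambda>t. a * t * ln t + f0 * (1 - t)) has_real_derivative a * 1 * ln t + a * t * (1 / t) + f0 * (0 - 1)) (at t)"
      using t by (intro derivative_eq_intros refl | simp)+
    then have "((\<lambda>t. a * t * ln t + f0 * (1 - t)) has_real_derivative a * (ln t + 1) - f0) (at t)"
      using t by (simp add: algebra_simps)
    then show ?thesis
      by (rule has_field_derivative_transform_within_open[where S = "{0<..}"]) (use t form in auto)
  qed
  have df: "deriv f t = a * (ln t + 1) - f0" if "t > 0" for t using d1[OF that] by (rule DERIV_imp_deriv)
  then show "deriv f 1 = a - f0" by simp
  have d2: "(deriv f has_real_derivative a / t) (at t)" if t: "t > 0" for t
  proof -
    have "((\<lambda>t. a * (ln t + 1) - f0) has_real_derivative a * (1 / t + 0) - 0) (at t)"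
      using t by (intro derivative_eq_intros refl | simp)+
    then have "((\<lambda>t. a * (ln t + 1) - f0) has_real_derivative a / t) (at t)" by simp
    then show ?thesis
      by (rule has_field_derivative_transform_within_open[where S = "{0<..}"]) (use t df in auto)
  qed
  have ddf: "deriv (deriv f) t = a / t" if "t > 0" for t using d2[OF that] by (rule DERIV_imp_deriv)
  then show "deriv (deriv f) 1 = a" by simp
  have d3: "(deriv (deriv f) has_real_derivative - a) (at 1)"
  proof -
    have "((\<lambda>t. a / t) has_real_derivative - a) (at 1)"
      by (rule derivative_eq_intros refl | simp)+
    then show ?thesis
      by (rule has_field_derivative_transform_within_open[where S = "{0<..}"]) (use ddf in auto)
  qed
  then show "deriv (deriv (deriv f)) 1 = - a" by (rule DERIV_imp_deriv)
qed

lemma lists_len_finite: "finite (lists_len n :: ('a::finite) list set)"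
proof -
  have "finite {xs :: 'a list. set xs \<subseteq> UNIV \<and> length xs = n}" by (rule finite_lists_length_eq) simp
  then show ?thesis unfolding lists_len_def by simp
qed

lemma lists_len_0: "lists_len 0 = {[]}" unfolding lists_len_def by auto

lemma lists_len_Suc: "lists_len (Suc n) = (\<lambda>(x, xs). x # xs) ` (UNIV \<times> lists_len n)"
  unfolding lists_len_def by (auto simp: image_iff length_Suc_conv)

lemma sum_lists_Suc:
  fixes g :: "('a::finite) list \<Rightarrow> real"
  shows "(\<Sum>zs\<in>lists_len (Suc n). g zs) = (\<Sum>x\<in>UNIV. \<Sum>xs\<in>lists_len n. g (x # xs))"
proof -
  have inj: "inj_on (\<lambda>(x, xs). x # xs) (UNIV \<times> lists_len n)" by (auto simp: inj_on_def)
  have "(\<Sum>zs\<in>lists_len (Suc n). g zs) = (\<Sum>p\<in>UNIV \<times> lists_len n. g ((\<lambda>(x, xs). x # xs) p))"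
    unfolding lists_len_Suc using sum.reindex[OF inj] by (simp add: comp_def)
  also have "\<dots> = (\<Sum>x\<in>UNIV. \<Sum>xs\<in>lists_len n. g (x # xs))"
    by (simp add: sum.cartesian_product prod.case_distrib)
  finally show ?thesis .
qed

lemma inputN_Cons: "inputN (Suc n) P (x # xs) = margX P x * inputN n P xs"
  unfolding inputN_def prod.lessThan_Suc_shift by simp

lemma chanN_Cons: "chanN (Suc n) P (x # xs) (y # ys) = P x y / margX P x * chanN n P xs ys"
  unfolding chanN_def prod.lessThan_Suc_shift by simp

definition W1 :: "('x \<Rightarrow> 'y::finite \<Rightarrow> real) \<Rightarrow> 'x \<Rightarrow> 'y \<Rightarrow> real" where
  "W1 P x y = P x y / margX P x"

lemma push_Cons:
  fixes R :: "('x::finite) list \<Rightarrow> real" and P :: "'x \<Rightarrow> 'y::finite \<Rightarrow> real"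
  shows "push (lists_len (Suc m)) (chanN (Suc m) P) R (y # ys)
       = pj UNIV (lists_len m) (W1 P) (chanN m P) (\<lambda>x xs. R (x # xs)) y ys"
  unfolding push_def pj_def sum_lists_Suc chanN_Cons W1_def by (simp add: mult.assoc)

locale setting =
  fixes P :: "'x::finite \<Rightarrow> 'y::finite \<Rightarrow> real"
  assumes Pn: "\<forall>x y. 0 \<le> P x y" and Ps: "(\<Sum>x\<in>UNIV. \<Sum>y\<in>UNIV. P x y) = 1"
    and mXp: "\<forall>x. margX P x > 0" and mYp: "\<forall>y. margY P y > 0"
begin

lemma mX_nz[simp]: "margX P x \<noteq> 0" using mXp by (metis less_irrefl)

lemma inputN_pos: "inputN n P xs > 0"
  unfolding inputN_def using mXp by (intro prod_pos) auto

lemma sum_margX: "(\<Sum>x\<in>UNIV. margX P x) = 1" unfolding margX_def using Ps by simp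

lemma inputN_sum: "(\<Sum>xs\<in>lists_len n. inputN n P xs) = 1"
proof (induction n)
  case 0 then show ?case by (simp add: lists_len_0 inputN_def)
next
  case (Suc n)
  then show ?case unfolding sum_lists_Suc inputN_Cons
    by (simp add: sum_distrib_left[symmetric] sum_distrib_right[symmetric] sum_margX)
qed

lemma W1_nonneg: "W1 P x y \<ge> 0" unfolding W1_def using Pn mXp by (simp add: less_imp_le)

lemma W1_sum: "(\<Sum>y\<in>UNIV. W1 P x y) = 1"
  unfolding W1_def by (simp add: sum_divide_distrib[symmetric] margX_def[symmetric])

lemma push_W1: "push UNIV (W1 P) (margX P) = margY P"
proof
  fix y
  show "push UNIV (W1 P) (margX P) y = margY P y"
    unfolding push_def W1_def margY_def by (intro sum.cong refl) simp
qed

lemma chanN_nonneg: "chanN n P xs ys \<ge> 0"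
  unfolding chanN_def using Pn mXp by (intro prod_nonneg) (simp add: less_imp_le)

lemma chanN_sum: "xs \<in> lists_len n \<Longrightarrow> (\<Sum>ys\<in>lists_len n. chanN n P xs ys) = 1"
proof (induction n arbitrary: xs)
  case 0 then show ?case by (simp add: lists_len_0 chanN_def)
next
  case (Suc n)
  then obtain x xs' where xs: "xs = x # xs'" "xs' \<in> lists_len n"
    unfolding lists_len_def by (auto simp: length_Suc_conv)
  have "(\<Sum>ys\<in>lists_len (Suc n). chanN (Suc n) P xs ys) = (\<Sum>y\<in>UNIV. W1 P x y * (\<Sum>ys\<in>lists_len n. chanN n P xs' ys))"
    unfolding sum_lists_Suc xs chanN_Cons W1_def by (simp add: sum_distrib_left)
  also have "\<dots> = 1" using Suc.IH[OF xs(2)] W1_sum by simp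
  finally show ?case .
qed

lemma push_inputN: "ys \<in> lists_len n \<Longrightarrow> push (lists_len n) (chanN n P) (inputN n P) ys = (\<Prod>i<n. margY P (ys ! i))"
proof (induction n arbitrary: ys)
  case 0 then show ?case by (simp add: lists_len_0 chanN_def inputN_def push_def)
next
  case (Suc n)
  then obtain y ys' where ys: "ys = y # ys'" "ys' \<in> lists_len n"
    unfolding lists_len_def by (auto simp: length_Suc_conv)
  have "push (lists_len (Suc n)) (chanN (Suc n) P) (inputN (Suc n) P) ys
      = (\<Sum>x\<in>UNIV. margX P x * W1 P x y) * push (lists_len n) (chanN n P) (inputN n P) ys'"
    unfolding ys push_def sum_lists_Suc chanN_Cons inputN_Cons sum_product
    by (intro sum.cong refl) (simp add: W1_def mult_ac)
  also have "(\<Sum>x\<in>UNIV. margX P x * W1 P x y) = margY P y" using push_W1 unfolding push_def by metis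
  finally show ?case using Suc.IH[OF ys(2)] ys(1) unfolding prod.lessThan_Suc_shift by simp
qed

lemma push_inputN_pos: "ys \<in> lists_len n \<Longrightarrow> push (lists_len n) (chanN n P) (inputN n P) ys > 0"
  using push_inputN mYp by (simp add: prod_pos)

lemma push_sum:
  assumes "\<forall>a\<in>A. (\<Sum>b\<in>B. W a b) = 1" "finite A" "finite B"
  shows "(\<Sum>b\<in>B. push A W R b) = (\<Sum>a\<in>A. R a)"
proof -
  have "(\<Sum>b\<in>B. push A W R b) = (\<Sum>a\<in>A. R a * (\<Sum>b\<in>B. W a b))"
    unfolding push_def by (subst sum.swap) (simp add: sum_distrib_left)
  then show ?thesis using assms by simp
qed

lemma push_nonneg:
  assumes "\<forall>a\<in>A. R a \<ge> 0" "\<forall>a\<in>A. W a b \<ge> 0"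
  shows "push A W R b \<ge> 0"
  unfolding push_def using assms by (intro sum_nonneg) auto

lemma tensor:
  assumes k: "k \<ge> 0"
    and base: "\<forall>R1. is_pmf_on UNIV R1 \<longrightarrow> kld UNIV (push UNIV (W1 P) R1) (margY P) \<le> k * kld UNIV R1 (margX P)"
  shows "\<forall>R. is_pmf_on (lists_len m) R \<longrightarrow>
      kld (lists_len m) (push (lists_len m) (chanN m P) R) (push (lists_len m) (chanN m P) (inputN m P))
        \<le> k * kld (lists_len m) R (inputN m P)"
proof (induction m)
  case 0
  show ?case
  proof (intro allI impI)
    fix R :: "'x list \<Rightarrow> real" assume "is_pmf_on (lists_len 0) R"
    then have R: "R [] = 1" unfolding is_pmf_on_def lists_len_0 by simp
    show "kld (lists_len 0) (push (lists_len 0) (chanN 0 P) R) (push (lists_len 0) (chanN 0 P) (inputN 0 P))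
        \<le> k * kld (lists_len 0) R (inputN 0 P)"
      by (simp add: lists_len_0 kld_def push_def chanN_def inputN_def R)
  qed
next
  case (Suc m)
  show ?case
  proof (intro allI impI)
    fix R :: "'x list \<Rightarrow> real" assume R: "is_pmf_on (lists_len (Suc m)) R"
    define R' where "R' x xs = R (x # xs)" for x xs
    have Rn: "\<forall>a\<in>UNIV. \<forall>b\<in>lists_len m. R' a b \<ge> 0"
      using R unfolding is_pmf_on_def R'_def lists_len_def by auto
    have Rs: "(\<Sum>a\<in>UNIV. \<Sum>b\<in>lists_len m. R' a b) = 1"
      using R unfolding is_pmf_on_def R'_def sum_lists_Suc by simp
    have H1: "\<forall>R1. is_pmf_on UNIV R1 \<longrightarrow> kld UNIV (push UNIV (W1 P) R1) (push UNIV (W1 P) (margX P)) \<le> k * kld UNIV R1 (margX P)"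
      using base unfolding push_W1 .
    have tb: "(\<Sum>c\<in>UNIV. \<Sum>d\<in>lists_len m. pj UNIV (lists_len m) (W1 P) (chanN m P) R' c d *
                ln (pj UNIV (lists_len m) (W1 P) (chanN m P) R' c d /
                   (push UNIV (W1 P) (margX P) c * push (lists_len m) (chanN m P) (inputN m P) d)))
         \<le> k * (\<Sum>a\<in>UNIV. \<Sum>b\<in>lists_len m. R' a b * ln (R' a b / (margX P a * inputN m P b)))"
    proof (rule two_block)
      show "finite (UNIV :: 'x set)" "finite (lists_len m :: 'x list set)"
        "finite (UNIV :: 'y set)" "finite (lists_len m :: 'y list set)"
        by (simp_all add: lists_len_finite)
      show "\<forall>a\<in>UNIV. 0 < margX P a" using mXp by simp
      show "\<forall>b\<in>lists_len m. 0 < inputN m P b" using inputN_pos by simp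
      show "\<forall>a\<in>UNIV. \<forall>c\<in>UNIV. 0 \<le> W1 P a c" using W1_nonneg by simp
      show "\<forall>a\<in>UNIV. (\<Sum>c\<in>UNIV. W1 P a c) = 1" using W1_sum by simp
      show "\<forall>b\<in>lists_len m. \<forall>d\<in>lists_len m. 0 \<le> chanN m P b d" using chanN_nonneg by simp
      show "\<forall>b\<in>lists_len m. (\<Sum>d\<in>lists_len m. chanN m P b d) = 1" using chanN_sum by simp
      show "\<forall>c\<in>UNIV. 0 < push UNIV (W1 P) (margX P) c" using push_W1 mYp by simp
      show "\<forall>d\<in>lists_len m. 0 < push (lists_len m) (chanN m P) (inputN m P) d" using push_inputN_pos by simp
    qed (use k H1 Suc.IH Rn Rs in auto)
    have lhs: "kld (lists_len (Suc m)) (push (lists_len (Suc m)) (chanN (Suc m) P) R)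
                  (push (lists_len (Suc m)) (chanN (Suc m) P) (inputN (Suc m) P))
        = (\<Sum>c\<in>UNIV. \<Sum>d\<in>lists_len m. pj UNIV (lists_len m) (W1 P) (chanN m P) R' c d *
                ln (pj UNIV (lists_len m) (W1 P) (chanN m P) R' c d /
                   (push UNIV (W1 P) (margX P) c * push (lists_len m) (chanN m P) (inputN m P) d)))"
    proof -
      have pi: "push (lists_len (Suc m)) (chanN (Suc m) P) (inputN (Suc m) P) (c # d)
          = push UNIV (W1 P) (margX P) c * push (lists_len m) (chanN m P) (inputN m P) d" for c d
        unfolding push_Cons unfolding pj_def push_def inputN_Cons sum_product
        by (intro sum.cong refl) (simp add: mult_ac)
      show ?thesis unfolding kld_def sum_lists_Suc unfolding pi unfolding push_Cons R'_def ..
    qed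
    have rhs: "kld (lists_len (Suc m)) R (inputN (Suc m) P)
        = (\<Sum>a\<in>UNIV. \<Sum>b\<in>lists_len m. R' a b * ln (R' a b / (margX P a * inputN m P b)))"
      unfolding kld_def sum_lists_Suc inputN_Cons R'_def ..
    show "kld (lists_len (Suc m)) (push (lists_len (Suc m)) (chanN (Suc m) P) R)
            (push (lists_len (Suc m)) (chanN (Suc m) P) (inputN (Suc m) P))
          \<le> k * kld (lists_len (Suc m)) R (inputN (Suc m) P)"
      unfolding lhs rhs using tb .
  qed
qed

end

lemma chis_prod:
  fixes a c :: "'a \<Rightarrow> real" and B :: "'b \<Rightarrow> real"
  assumes "finite A2" "\<forall>b\<in>A2. B b > 0" "sum B A2 = 1"
  shows "(\<Sum>x\<in>A1. \<Sum>xs\<in>A2. (a x * B xs - c x * B xs)\<^sup>2 / (c x * B xs)) = (\<Sum>x\<in>A1. (a x - c x)\<^sup>2 / c x)"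
proof (intro sum.cong refl)
  fix x assume "x \<in> A1"
  have "(\<Sum>xs\<in>A2. (a x * B xs - c x * B xs)\<^sup>2 / (c x * B xs)) = (\<Sum>xs\<in>A2. (a x - c x)\<^sup>2 / c x * B xs)"
  proof (intro sum.cong refl)
    fix xs assume "xs \<in> A2"
    then have b: "B xs \<noteq> 0" using assms(2) by force
    show "(a x * B xs - c x * B xs)\<^sup>2 / (c x * B xs) = (a x - c x)\<^sup>2 / c x * B xs"
    proof (cases "c x = 0")
      case False
      then show ?thesis using b by (simp add: power2_eq_square field_simps)
    qed simp
  qed
  also have "\<dots> = (a x - c x)\<^sup>2 / c x * sum B A2" by (rule sum_distrib_left[symmetric])
  also have "\<dots> = (a x - c x)\<^sup>2 / c x" using assms(3) by simp
  finally show "(\<Sum>xs\<in>A2. (a x * B xs - c x * B xs)\<^sup>2 / (c x * B xs)) = (a x - c x)\<^sup>2 / c x" .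
qed

context setting
begin

lemma push_level_sum: "(\<Sum>ys\<in>lists_len n. push (lists_len n) (chanN n P) R ys) = (\<Sum>xs\<in>lists_len n. R xs)"
  by (rule push_sum) (use chanN_sum lists_len_finite in auto)

lemma embed:
  fixes m :: nat and R1 :: "'x \<Rightarrow> real"
  assumes R1: "is_pmf_on UNIV R1"
  defines "R \<equiv> (\<lambda>zs. R1 (hd zs) * inputN m P (tl zs))"
  shows "is_pmf_on (lists_len (Suc m)) R"
    and "chis (lists_len (Suc m)) R (inputN (Suc m) P) = chis UNIV R1 (margX P)"
    and "chis (lists_len (Suc m)) (push (lists_len (Suc m)) (chanN (Suc m) P) R)
           (push (lists_len (Suc m)) (chanN (Suc m) P) (inputN (Suc m) P))
         = chis UNIV (push UNIV (W1 P) R1) (margY P)"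
proof -
  have Rc: "R (x # xs) = R1 x * inputN m P xs" for x xs unfolding R_def by simp
  show "is_pmf_on (lists_len (Suc m)) R"
    unfolding is_pmf_on_def
  proof
    show "\<forall>a\<in>lists_len (Suc m). 0 \<le> R a"
    proof
      fix zs :: "'x list"
      have "inputN m P (tl zs) > 0" by (rule inputN_pos)
      moreover have "R1 (hd zs) \<ge> 0" using R1 unfolding is_pmf_on_def by auto
      ultimately show "0 \<le> R zs" unfolding R_def by simp
    qed
    show "sum R (lists_len (Suc m)) = 1" unfolding sum_lists_Suc Rc
      using R1 inputN_sum unfolding is_pmf_on_def by (simp add: sum_distrib_left[symmetric])
  qed
  show "chis (lists_len (Suc m)) R (inputN (Suc m) P) = chis UNIV R1 (margX P)"
    unfolding chis_def sum_lists_Suc Rc inputN_Cons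
    by (rule chis_prod) (use lists_len_finite inputN_pos inputN_sum in auto)
  have pR: "push (lists_len (Suc m)) (chanN (Suc m) P) R (y # ys)
      = push UNIV (W1 P) R1 y * push (lists_len m) (chanN m P) (inputN m P) ys" for y ys
    unfolding push_Cons unfolding pj_def push_def Rc sum_product
    by (intro sum.cong refl) (simp add: mult_ac)
  have pP: "push (lists_len (Suc m)) (chanN (Suc m) P) (inputN (Suc m) P) (y # ys)
      = margY P y * push (lists_len m) (chanN m P) (inputN m P) ys" for y ys
    unfolding push_W1[symmetric] push_Cons unfolding pj_def push_def inputN_Cons sum_product
    by (intro sum.cong refl) (simp add: mult_ac)
  show "chis (lists_len (Suc m)) (push (lists_len (Suc m)) (chanN (Suc m) P) R)
           (push (lists_len (Suc m)) (chanN (Suc m) P) (inputN (Suc m) P))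
         = chis UNIV (push UNIV (W1 P) R1) (margY P)"
    unfolding chis_def sum_lists_Suc pR pP
  proof (rule chis_prod)
    show "finite (lists_len m :: 'y list set)" by (rule lists_len_finite)
    show "\<forall>b\<in>lists_len m. 0 < push (lists_len m) (chanN m P) (inputN m P) b" using push_inputN_pos by auto
    show "sum (push (lists_len m) (chanN m P) (inputN m P)) (lists_len m) = 1"
      using push_level_sum inputN_sum by simp
  qed
qed

lemma chis_zero:
  assumes "chis UNIV R1 (margX P) = 0"
  shows "chis UNIV (push UNIV (W1 P) R1) (margY P) = 0"
proof -
  have "\<forall>x\<in>UNIV. (R1 x - margX P x)\<^sup>2 / margX P x = 0"
    using assms unfolding chis_def
    by (subst sum_nonneg_eq_0_iff[symmetric]) (use mXp in \<open>auto intro!: divide_nonneg_pos\<close>)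
  then have "R1 = margX P" using mXp by (auto simp: fun_eq_iff)
  then show ?thesis using push_W1 by (simp add: chis_def)
qed

lemma push1_pmf:
  assumes "is_pmf_on UNIV R1"
  shows "\<forall>y\<in>UNIV. push UNIV (W1 P) R1 y \<ge> 0" "sum (push UNIV (W1 P) R1) UNIV = 1"
proof -
  show "\<forall>y\<in>UNIV. push UNIV (W1 P) R1 y \<ge> 0"
    using assms W1_nonneg unfolding is_pmf_on_def by (auto intro!: push_nonneg)
  show "sum (push UNIV (W1 P) R1) UNIV = 1"
    using push_sum[of UNIV "W1 P" UNIV R1] W1_sum assms unfolding is_pmf_on_def by simp
qed

lemma sum_margY: "sum (margY P) UNIV = 1"
  using push1_pmf(2)[of "margX P"] sum_margX mXp unfolding push_W1 is_pmf_on_def by (simp add: less_imp_le)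

end

theorem corollary3:
  fixes P :: "'x::finite \<Rightarrow> 'y::finite \<Rightarrow> real"
    and f :: "real \<Rightarrow> real" and f0 :: real and n :: nat
  assumes "CARD('x) \<ge> 2" and "CARD('y) \<ge> 2"
    and "\<forall>x y. 0 \<le> P x y" and "(\<Sum>x\<in>UNIV. \<Sum>y\<in>UNIV. P x y) = 1"
    and "\<forall>x. margX P x > 0" and "\<forall>y. margY P y > 0"
    and "convex_on {0<..} f" and "strictly_convex_at_one f" and "thrice_diff_at f 1"
    and "f 1 = 0" and "deriv (deriv f) 1 > 0"
    and "\<forall>t>0. (f t - deriv f 1 * (t - 1)) *
               (1 - deriv (deriv (deriv f)) 1 / (3 * deriv (deriv f) 1) * (t - 1))
             \<ge> deriv (deriv f) 1 / 2 * (t - 1)\<^sup>2"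
    and "(f \<longlongrightarrow> f0) (at_right 0)"
    and "concave_on {0<..} (\<lambda>x. (f x - f0) / x)"
    and "fent_subadditive f0 f" and "fent_homogeneous f0 f"
    and "n \<ge> 1"
  shows "eta_chi2 (lists_len n) (lists_len n) (inputN n P) (chanN n P)
           \<le> eta f0 f (lists_len n) (lists_len n) (inputN n P) (chanN n P)
         \<and> eta f0 f (lists_len n) (lists_len n) (inputN n P) (chanN n P)
           \<le> ereal ((deriv f 1 + f0) / (deriv (deriv f) 1 * Min (range (margX P))))
               * eta_chi2 (lists_len n) (lists_len n) (inputN n P) (chanN n P)"
proof -
  interpret S: setting P using assms(3-6) by unfold_locales
  define a where "a = deriv f 1 + f0"
  have form: "\<forall>t>0. f t = a * t * ln t + f0 * (1 - t)"
    using f_form[OF assms(16) assms(10) assms(9)] unfolding a_def .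
  note dv = f_derivs[OF form]
  have ap: "a > 0" using assms(11) dv(2) by simp
  have H: "\<forall>t::real\<ge>0. (t * ln t - (t - 1)) * (1 + (t - 1) / 3) \<ge> (t - 1)\<^sup>2 / 2"
  proof (intro allI impI)
    fix t :: real assume t0: "t \<ge> 0"
    show "(t * ln t - (t - 1)) * (1 + (t - 1) / 3) \<ge> (t - 1)\<^sup>2 / 2"
    proof (cases "t = 0")
      case True then show ?thesis by simp
    next
      case False
      then have t: "t > 0" using t0 by simp
      have h: "(f t - deriv f 1 * (t - 1)) * (1 - deriv (deriv (deriv f)) 1 / (3 * deriv (deriv f) 1) * (t - 1))
             \<ge> deriv (deriv f) 1 / 2 * (t - 1)\<^sup>2" using assms(12) t by blast
      have e1: "f t - deriv f 1 * (t - 1) = a * (t * ln t - (t - 1))"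
      proof -
        have ft: "f t = a * t * ln t + f0 * (1 - t)" using form t by blast
        show ?thesis unfolding ft dv(1) by (simp add: algebra_simps)
      qed
      have e2: "1 - deriv (deriv (deriv f)) 1 / (3 * deriv (deriv f) 1) * (t - 1) = 1 + (t - 1) / 3"
        using dv ap by (simp add: field_simps)
      have h2: "a / 2 * (t - 1)\<^sup>2 \<le> (a * (t * ln t - (t - 1))) * (1 + (t - 1) / 3)"
        using h unfolding e1 e2 unfolding dv(2) .
      have q1: "a / 2 * (t - 1)\<^sup>2 = a * ((t - 1)\<^sup>2 / 2)" by simp
      have q2: "(a * (t * ln t - (t - 1))) * (1 + (t - 1) / 3) = a * ((t * ln t - (t - 1)) * (1 + (t - 1) / 3))"
        by (rule mult.assoc)
      have "a * ((t - 1)\<^sup>2 / 2) \<le> a * ((t * ln t - (t - 1)) * (1 + (t - 1) / 3))"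
        using h2 unfolding q1 q2 .
      then show ?thesis using ap by (simp only: mult_le_cancel_left_pos)
    qed
  qed
  define pm where "pm = Min (range (margX P))"
  have pm_in: "pm \<in> range (margX P)" unfolding pm_def by (rule Min_in) auto
  have pm_pos: "pm > 0" using pm_in assms(5) by auto
  have pm_le: "\<forall>x. pm \<le> margX P x" unfolding pm_def by (auto intro!: Min_le)
  have Ceq: "(deriv f 1 + f0) / (deriv (deriv f) 1 * Min (range (margX P))) = 1 / pm"
    unfolding pm_def[symmetric] dv(1) dv(2) using ap by simp
  obtain m where nm: "n = Suc m" using assms(17) by (cases n) auto
  have finX: "finite (lists_len n :: 'x list set)" and finY: "finite (lists_len n :: 'y list set)"
    by (simp_all add: lists_len_finite)
  have Pnp: "\<forall>xs\<in>lists_len n. inputN n P xs > 0" using S.inputN_pos by simp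
  have Pns: "sum (inputN n P) (lists_len n) = 1" using S.inputN_sum by simp
  have Wnn: "\<forall>xs\<in>lists_len n. \<forall>ys\<in>lists_len n. chanN n P xs ys \<ge> 0" using S.chanN_nonneg by simp
  have Wns: "\<forall>xs\<in>lists_len n. (\<Sum>ys\<in>lists_len n. chanN n P xs ys) = 1" using S.chanN_sum by simp
  have QWp: "\<forall>ys\<in>lists_len n. push (lists_len n) (chanN n P) (inputN n P) ys > 0"
    using S.push_inputN_pos by simp
  have fdR: "fdiv f0 f (lists_len n) R (inputN n P) = ereal (a * kld (lists_len n) R (inputN n P))"
    if R: "is_pmf_on (lists_len n) R" for R
    using R Pns unfolding is_pmf_on_def by (intro fdiv_form[OF finX Pnp _ _ form]) auto
  have fdW: "fdiv f0 f (lists_len n) (push (lists_len n) (chanN n P) R) (push (lists_len n) (chanN n P) (inputN n P))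
      = ereal (a * kld (lists_len n) (push (lists_len n) (chanN n P) R) (push (lists_len n) (chanN n P) (inputN n P)))"
    if R: "is_pmf_on (lists_len n) R" for R
  proof (rule fdiv_form[OF finY QWp _ _ form])
    show "\<forall>a\<in>lists_len n. 0 \<le> push (lists_len n) (chanN n P) R a"
      using R Wnn unfolding is_pmf_on_def by (auto intro!: S.push_nonneg)
    show "sum (push (lists_len n) (chanN n P) R) (lists_len n) = sum (push (lists_len n) (chanN n P) (inputN n P)) (lists_len n)"
      unfolding S.push_level_sum using R Pns unfolding is_pmf_on_def by simp
  qed
  have chR: "chi2div (lists_len n) R (inputN n P) = ereal (chis (lists_len n) R (inputN n P))" for R
    using chi2div_eq Pnp by blast
  have chW: "chi2div (lists_len n) (push (lists_len n) (chanN n P) R) (push (lists_len n) (chanN n P) (inputN n P))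
      = ereal (chis (lists_len n) (push (lists_len n) (chanN n P) R) (push (lists_len n) (chanN n P) (inputN n P)))" for R
    using chi2div_eq QWp by blast
  define Sf where "Sf = {fdiv f0 f (lists_len n) (push (lists_len n) (chanN n P) R) (push (lists_len n) (chanN n P) (inputN n P))
            / fdiv f0 f (lists_len n) R (inputN n P) | R.
            is_pmf_on (lists_len n) R \<and> 0 < fdiv f0 f (lists_len n) R (inputN n P) \<and> fdiv f0 f (lists_len n) R (inputN n P) < \<infinity>}"
  define Sc where "Sc = {fdiv 1 (\<lambda>t. (t - 1)\<^sup>2) (lists_len n) (push (lists_len n) (chanN n P) R) (push (lists_len n) (chanN n P) (inputN n P))
            / fdiv 1 (\<lambda>t. (t - 1)\<^sup>2) (lists_len n) R (inputN n P) | R.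
            is_pmf_on (lists_len n) R \<and> 0 < fdiv 1 (\<lambda>t. (t - 1)\<^sup>2) (lists_len n) R (inputN n P)
              \<and> fdiv 1 (\<lambda>t. (t - 1)\<^sup>2) (lists_len n) R (inputN n P) < \<infinity>}"
  have etaf: "eta f0 f (lists_len n) (lists_len n) (inputN n P) (chanN n P) = Sup Sf"
    unfolding eta_def Sf_def ..
  have etac: "eta_chi2 (lists_len n) (lists_len n) (inputN n P) (chanN n P) = Sup Sc"
    unfolding eta_chi2_def eta_def Sc_def ..
  have Sf_elem: "ereal (kld (lists_len n) (push (lists_len n) (chanN n P) R) (push (lists_len n) (chanN n P) (inputN n P))
                 / kld (lists_len n) R (inputN n P)) \<in> Sf"
    if R: "is_pmf_on (lists_len n) R" and kp: "kld (lists_len n) R (inputN n P) > 0" for R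
  proof -
    have "fdiv f0 f (lists_len n) (push (lists_len n) (chanN n P) R) (push (lists_len n) (chanN n P) (inputN n P))
            / fdiv f0 f (lists_len n) R (inputN n P)
        = ereal (kld (lists_len n) (push (lists_len n) (chanN n P) R) (push (lists_len n) (chanN n P) (inputN n P))
                 / kld (lists_len n) R (inputN n P))"
      unfolding fdR[OF R] fdW[OF R] using ap kp by simp
    moreover have "0 < fdiv f0 f (lists_len n) R (inputN n P)" "fdiv f0 f (lists_len n) R (inputN n P) < \<infinity>"
      unfolding fdR[OF R] using ap kp by simp_all
    note facts = calculation this
    show ?thesis unfolding Sf_def mem_Collect_eq
      by (rule exI[of _ R]) (use facts R in simp)
  qed
  have Sc_elem: "ereal (chis (lists_len n) (push (lists_len n) (chanN n P) R) (push (lists_len n) (chanN n P) (inputN n P))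
                 / chis (lists_len n) R (inputN n P)) \<in> Sc"
    if R: "is_pmf_on (lists_len n) R" and kp: "chis (lists_len n) R (inputN n P) > 0" for R
  proof -
    have "fdiv 1 (\<lambda>t. (t - 1)\<^sup>2) (lists_len n) (push (lists_len n) (chanN n P) R) (push (lists_len n) (chanN n P) (inputN n P))
            / fdiv 1 (\<lambda>t. (t - 1)\<^sup>2) (lists_len n) R (inputN n P)
        = ereal (chis (lists_len n) (push (lists_len n) (chanN n P) R) (push (lists_len n) (chanN n P) (inputN n P))
                 / chis (lists_len n) R (inputN n P))"
      unfolding chR[unfolded chi2div_def] chW[unfolded chi2div_def] using kp by simp
    moreover have "0 < fdiv 1 (\<lambda>t. (t - 1)\<^sup>2) (lists_len n) R (inputN n P)"
      "fdiv 1 (\<lambda>t. (t - 1)\<^sup>2) (lists_len n) R (inputN n P) < \<infinity>"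
      unfolding chR[unfolded chi2div_def] using kp by simp_all
    note facts = calculation this
    show ?thesis unfolding Sc_def mem_Collect_eq
      by (rule exI[of _ R]) (use facts R in simp)
  qed
  have part1: "Sup Sc \<le> Sup Sf"
  proof (rule Sup_least)
    fix z assume "z \<in> Sc"
    then obtain R where R: "is_pmf_on (lists_len n) R"
      and z: "z = fdiv 1 (\<lambda>t. (t - 1)\<^sup>2) (lists_len n) (push (lists_len n) (chanN n P) R) (push (lists_len n) (chanN n P) (inputN n P))
            / fdiv 1 (\<lambda>t. (t - 1)\<^sup>2) (lists_len n) R (inputN n P)"
      and p: "0 < fdiv 1 (\<lambda>t. (t - 1)\<^sup>2) (lists_len n) R (inputN n P)"
      unfolding Sc_def by blast
    have cp: "chis (lists_len n) R (inputN n P) > 0" using p unfolding chR[unfolded chi2div_def] by simp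
    have z': "z = ereal (chis (lists_len n) (push (lists_len n) (chanN n P) R) (push (lists_len n) (chanN n P) (inputN n P))
                 / chis (lists_len n) R (inputN n P))"
      unfolding z chR[unfolded chi2div_def] chW[unfolded chi2div_def] using cp by simp
    show "z \<le> Sup Sf" unfolding z'
    proof (rule perturb[OF finX finY Pnp Pns Wnn Wns QWp _ _ cp])
      show "\<forall>a\<in>lists_len n. 0 \<le> R a" "sum R (lists_len n) = 1" using R unfolding is_pmf_on_def by auto
      show "\<forall>R'. is_pmf_on (lists_len n) R' \<and> 0 < kld (lists_len n) R' (inputN n P) \<longrightarrow>
          ereal (kld (lists_len n) (push (lists_len n) (chanN n P) R') (push (lists_len n) (chanN n P) (inputN n P))
             / kld (lists_len n) R' (inputN n P)) \<le> Sup Sf"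
        using Sf_elem by (auto intro: Sup_upper)
    qed
  qed
  have elem1: "ereal (chis UNIV (push UNIV (W1 P) R1) (margY P) / chis UNIV R1 (margX P)) \<le> Sup Sc"
    if R1: "is_pmf_on UNIV R1" and cp: "chis UNIV R1 (margX P) > 0" for R1
  proof -
    note em = S.embed[OF R1, of m]
    show ?thesis
      using Sc_elem[of "\<lambda>zs. R1 (hd zs) * inputN m P (tl zs)"] em cp unfolding nm
      by (auto intro: Sup_upper)
  qed
  obtain x0 x1 :: 'x where x01: "x0 \<noteq> x1"
  proof -
    obtain x0 :: 'x where True by simp
    have "UNIV \<noteq> {x0}" using assms(1) by (metis One_nat_def card.empty card.insert empty_iff finite.intros(1) numeral_le_one_iff semiring_norm(69))
    then obtain x1 where "x1 \<noteq> x0" by blast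
    then show ?thesis using that by blast
  qed
  define Rd where "Rd x = (if x = x0 then 1 else (0::real))" for x
  have Rd: "is_pmf_on UNIV Rd" unfolding is_pmf_on_def Rd_def by simp
  have Rdc: "chis UNIV Rd (margX P) > 0"
  proof -
    have "(Rd x1 - margX P x1)\<^sup>2 / margX P x1 \<le> chis UNIV Rd (margX P)"
      unfolding chis_def using assms(5) by (intro member_le_sum) (auto intro!: divide_nonneg_pos)
    moreover have "(Rd x1 - margX P x1)\<^sup>2 / margX P x1 = margX P x1"
      unfolding Rd_def using x01 assms(5) by (simp add: power2_eq_square)
    ultimately show ?thesis using assms(5) by (metis less_le_trans)
  qed
  have Sc0: "Sup Sc \<ge> 0"
  proof -
    have "0 \<le> chis UNIV (push UNIV (W1 P) Rd) (margY P) / chis UNIV Rd (margX P)"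
      using chis_nonneg[of UNIV "margY P"] assms(6) Rdc by simp
    then have "ereal 0 \<le> ereal (chis UNIV (push UNIV (W1 P) Rd) (margY P) / chis UNIV Rd (margX P))" by simp
    also have "\<dots> \<le> Sup Sc" by (rule elem1[OF Rd Rdc])
    finally show ?thesis by (simp add: zero_ereal_def)
  qed
  have part2: "Sup Sf \<le> ereal (1 / pm) * Sup Sc"
  proof (cases "Sup Sc = \<infinity>")
    case True
    then show ?thesis using pm_pos by simp
  next
    case False
    then obtain e where e: "Sup Sc = ereal e" using Sc0 by (cases "Sup Sc") auto
    have e0: "e \<ge> 0" using Sc0 e by simp
    have base: "\<forall>R1. is_pmf_on UNIV R1 \<longrightarrow> kld UNIV (push UNIV (W1 P) R1) (margY P) \<le> (e / pm) * kld UNIV R1 (margX P)"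
    proof (intro allI impI)
      fix R1 :: "'x \<Rightarrow> real" assume R1: "is_pmf_on UNIV R1"
      have R1n: "\<forall>a\<in>UNIV. 0 \<le> R1 a" and R1s: "sum R1 UNIV = 1" using R1 unfolding is_pmf_on_def by auto
      have k1: "kld UNIV (push UNIV (W1 P) R1) (margY P) \<le> chis UNIV (push UNIV (W1 P) R1) (margY P)"
        using kld_le_chis[of UNIV "margY P" "push UNIV (W1 P) R1"] S.push1_pmf[OF R1] assms(6) S.sum_margY by simp
      have k2: "chis UNIV (push UNIV (W1 P) R1) (margY P) \<le> e * chis UNIV R1 (margX P)"
      proof (cases "chis UNIV R1 (margX P) = 0")
        case True then show ?thesis using S.chis_zero by simp
      next
        case False
        then have cp: "chis UNIV R1 (margX P) > 0" using chis_nonneg[of UNIV "margX P" R1] assms(5) by simp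
        have "ereal (chis UNIV (push UNIV (W1 P) R1) (margY P) / chis UNIV R1 (margX P)) \<le> ereal e"
          using elem1[OF R1 cp] e by simp
        then have "chis UNIV (push UNIV (W1 P) R1) (margY P) / chis UNIV R1 (margX P) \<le> e" by simp
        then show ?thesis using cp by (simp add: divide_le_eq)
      qed
      have k3: "chis UNIV R1 (margX P) \<le> kld UNIV R1 (margX P) / pm"
        using chis_le_kld[of UNIV "margX P" R1, OF _ _ R1n R1s S.sum_margX H pm_pos] assms(5) pm_le by simp
      have "e * chis UNIV R1 (margX P) \<le> e * (kld UNIV R1 (margX P) / pm)"
        using k3 e0 by (rule mult_left_mono)
      then show "kld UNIV (push UNIV (W1 P) R1) (margY P) \<le> (e / pm) * kld UNIV R1 (margX P)"
        using k1 k2 by simp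
    qed
    have ten: "\<forall>R. is_pmf_on (lists_len n) R \<longrightarrow>
      kld (lists_len n) (push (lists_len n) (chanN n P) R) (push (lists_len n) (chanN n P) (inputN n P))
        \<le> (e / pm) * kld (lists_len n) R (inputN n P)"
      using S.tensor[OF _ base] e0 pm_pos by simp
    show ?thesis
    proof (rule Sup_least)
      fix z assume "z \<in> Sf"
      then obtain R where R: "is_pmf_on (lists_len n) R"
        and z: "z = fdiv f0 f (lists_len n) (push (lists_len n) (chanN n P) R) (push (lists_len n) (chanN n P) (inputN n P))
            / fdiv f0 f (lists_len n) R (inputN n P)"
        and p: "0 < fdiv f0 f (lists_len n) R (inputN n P)"
        unfolding Sf_def by blast
      have kp: "kld (lists_len n) R (inputN n P) > 0" using p unfolding fdR[OF R] using ap
        by (simp add: zero_less_mult_iff)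
      have z': "z = ereal (kld (lists_len n) (push (lists_len n) (chanN n P) R) (push (lists_len n) (chanN n P) (inputN n P))
                 / kld (lists_len n) R (inputN n P))"
        unfolding z fdR[OF R] fdW[OF R] using ap kp by simp
      have "kld (lists_len n) (push (lists_len n) (chanN n P) R) (push (lists_len n) (chanN n P) (inputN n P))
                 / kld (lists_len n) R (inputN n P) \<le> e / pm"
        using ten R kp by (simp add: divide_le_eq)
      then show "z \<le> ereal (1 / pm) * Sup Sc" unfolding z' e by simp
    qed
  qed
  show ?thesis unfolding etaf etac Ceq using part1 part2 by simp
qed

end
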